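(* Let $0<\mu<\lambda_{\min}(A)$ and $\ell\ge1$, and assume that $R_0,\dots,R_{\ell-1}$ (from BCG) have full column rank. For $k=0,\dots,\ell-1$ put $\Upsilon^{(\mu)}_k=\Phi_k^{-1}(\Delta^{(\mu)}_{k+1})^{-1}\Phi_k$ and $\Theta^{(\mu)}_k=(R_k^TR_k)\Upsilon^{(\mu)}_k$. Then for every $k=0,\dots,\ell-1$ the matrices $\Delta^{(\mu)}_{k+1}$ and $\Theta^{(\mu)}_k-\Theta_k$ are symmetric positive definite.
   Context: Let $A\in\mathbb{R}^{n\times n}$ be symmetric positive definite, let $B,X_0\in\mathbb{R}^{n\times m}$, and let $X=A^{-1}B$. The block conjugate gradient (BCG) algorithm sets $R_0=B-AX_0$, $P_0=R_0$, and for $k=1,2,\dots$: $\Upsilon_{k-1}=(P_{k-1}^TAP_{k-1})^{-1}(R_{k-1}^TR_{k-1})$, $X_k=X_{k-1}+P_{k-1}\Upsilon_{k-1}$, $R_k=R_{k-1}-AP_{k-1}\Upsilon_{k-1}$, $\Xi_k=(R_{k-1}^TR_{k-1})^{-1}(R_k^TR_k)$, $P_k=R_k+P_{k-1}\Xi_k$. Define $\mathfrak{E}_k=(X-X_k)^TA(X-X_k)$ and $\Theta_k=(R_k^TR_k)\Upsilon_k$. The block Lanczos algorithm below is started from the same $R_0=B-AX_0$. Let $A\in\mathbb{R}^{n\times n}$ be symmetric positive definite and $R_0\in\mathbb{R}^{n\times m}$ of full column rank. The block Lanczos algorithm started from $R_0$ is: $V_0=0$; $V_1\Gamma_0=R_0$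 is a QR factorization ($V_1\in\mathbb{R}^{n\times m}$ with orthonormal columns, $\Gamma_0\in\mathbb{R}^{m\times m}$ upper triangular); for $k=1,2,\dots$: $W=AV_k-V_{k-1}\Gamma_{k-1}^T$, $\Omega_k=V_k^TW$, and $V_{k+1}\Gamma_k=W-V_k\Omega_k$ is a QR factorization. It is assumed that for all indices considered the block Krylov subspace $\mathrm{colspan}\{R_0,AR_0,\dots,A^{j-1}R_0\}$ has dimension $jm$, so that every $\Gamma_j$ is nonsingular and $V_i^TV_j=\delta_{ij}I_m$. Put $\mathcal V_k=(V_1,\dots,V_k)\in\mathbb{R}^{n\times km}$ and let $T_k\in\mathbb{R}^{km\times km}$ be the symmetric block tridiagonal matrix with diagonal blocks $\Omega_1,\dots,\Omega_k$, subdiagonal blocks $\Gamma_1,\dots,\Gamma_{k-1}$ and superdiagonal blocks $\Gamma_1^T,\dots,\Gamma_{k-1}^T$; one has $A\mathcal V_k=\mathcal V_kT_k+V_{k+1}\Gamma_kE_k^T$ and $T_k=\mathcal V_k^TA\mathcal V_k$ is symmetric positive definite. Define $\Delta_1=\Omega_1$, $\Delta_j=\Omega_j-\Gamma_{j-1}\Delta_{j-1}^{-1}\Gamma_{j-1}^T$ ($j\ge2$) (the diagonal blocks of the block $LDL^T$-type factorization of $T_k$; they are symmetric positive definite), $\Pi_j=\Gamma_j\Delta_j^{-1}$, $\Phi_0=\Gamma_0$ and $\Phi_j=\Pi_j\Phi_{j-1}$. Let $E_j=e_j\otimes I_m\in\mathbb{R}^{km\times m}$; for $M\in\mathbb{R}^{km\times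 km}$, $[M]_{i,j}$ denotes its $(i,j)$ block of size $m\times m$, and for $Y\in\mathbb{R}^{km\times m}$, $[Y]_j$ denotes its $j$th $m\times m$ block. Shifted quantities: for $\mu\in\mathbb{R}$ let $\overline\Delta^{(\mu)}_1=\Omega_1-\mu I_m$ and $\overline\Delta^{(\mu)}_{j+1}=\Omega_{j+1}-\mu I_m-\Gamma_j(\overline\Delta^{(\mu)}_j)^{-1}\Gamma_j^T$ (the diagonal blocks of the analogous factorization of $T_k-\mu I$). For $k\ge1$ let $\Omega^{(\mu)}_{k+1}=\mu I_m+\Gamma_k[(T_k-\mu I)^{-1}]_{k,k}\Gamma_k^T$ and let $T^{(\mu)}_{k+1}$ be $T_{k+1}$ with its last diagonal block $\Omega_{k+1}$ replaced by $\Omega^{(\mu)}_{k+1}$. Put $\Delta^{(\mu)}_1=\mu I_m$ and, for $k\ge1$, $\Delta^{(\mu)}_{k+1}=\Omega^{(\mu)}_{k+1}-\Gamma_k\Delta_k^{-1}\Gamma_k^T$ (the last diagonal block of the factorization of $T^{(\mu)}_{k+1}$). $\lambda_{\min}(A)$ denotes the smallest eigenvalue of $A$. *)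

theory Defs
  imports "Jordan_Normal_Form.Matrix" "Jordan_Normal_Form.Char_Poly"
          "Jordan_Normal_Form.Gauss_Jordan_Elimination"
begin

text \<open>Inverse of a (square, invertible) matrix; the zero matrix is returned for singular
  input, which never happens in the situations considered below.\<close>
definition minv :: "real mat \<Rightarrow> real mat" where
  "minv M = (case mat_inverse M of Some N \<Rightarrow> N | None \<Rightarrow> 0\<^sub>m (dim_row M) (dim_col M))"

definition spd :: "nat \<Rightarrow> real mat \<Rightarrow> bool" where
  "spd d M \<longleftrightarrow> M \<in> carrier_mat d d \<and> M\<^sup>T = M \<and>
     (\<forall>x \<in> carrier_vec d. x \<noteq> 0\<^sub>v d \<longrightarrow> x \<bullet> (M *\<^sub>v x) > 0)"

definition full_col_rank :: "real mat \<Rightarrow> bool" where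
  "full_col_rank M \<longleftrightarrow> (\<forall>x \<in> carrier_vec (dim_col M). M *\<^sub>v x = 0\<^sub>v (dim_row M) \<longrightarrow> x = 0\<^sub>v (dim_col M))"

definition lambda_min :: "real mat \<Rightarrow> real" where
  "lambda_min A = Min {ev. eigenvalue A ev}"

definition is_QR :: "nat \<Rightarrow> nat \<Rightarrow> real mat \<Rightarrow> real mat \<Rightarrow> real mat \<Rightarrow> bool" where
  "is_QR n m M Q R \<longleftrightarrow> Q \<in> carrier_mat n m \<and> R \<in> carrier_mat m m \<and>
     Q\<^sup>T * Q = 1\<^sub>m m \<and> upper_triangular R \<and> Q * R = M"

text \<open>Block Krylov matrix (R0, A R0, ..., A^(j-1) R0).\<close>
definition krylov_mat :: "nat \<Rightarrow> nat \<Rightarrow> real mat \<Rightarrow> real mat \<Rightarrow> nat \<Rightarrow> real mat" where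
  "krylov_mat n m A R0 j = mat n (j * m) (\<lambda>(r, c). ((A ^\<^sub>m (c div m)) * R0) $$ (r, c mod m))"

primrec bcg :: "real mat \<Rightarrow> real mat \<Rightarrow> real mat \<Rightarrow> nat \<Rightarrow> real mat \<times> real mat \<times> real mat" where
  "bcg A B X0 0 = (X0, B - A * X0, B - A * X0)"
| "bcg A B X0 (Suc k) =
     (let (X, R, P) = bcg A B X0 k;
          Ups = minv (P\<^sup>T * A * P) * (R\<^sup>T * R);
          X' = X + P * Ups;
          R' = R - A * P * Ups;
          Xi = minv (R\<^sup>T * R) * (R'\<^sup>T * R');
          P' = R' + P * Xi
      in (X', R', P'))"

definition bcgX where "bcgX A B X0 k = fst (bcg A B X0 k)"
definition bcgR where "bcgR A B X0 k = fst (snd (bcg A B X0 k))"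
definition bcgP where "bcgP A B X0 k = snd (snd (bcg A B X0 k))"

definition bcgUps where
  "bcgUps A B X0 k = minv ((bcgP A B X0 k)\<^sup>T * A * bcgP A B X0 k) *
                      ((bcgR A B X0 k)\<^sup>T * bcgR A B X0 k)"

definition bcgTheta where
  "bcgTheta A B X0 k = ((bcgR A B X0 k)\<^sup>T * bcgR A B X0 k) * bcgUps A B X0 k"

definition lanczos :: "nat \<Rightarrow> nat \<Rightarrow> real mat \<Rightarrow> real mat \<Rightarrow> nat \<Rightarrow>
    (nat \<Rightarrow> real mat) \<Rightarrow> (nat \<Rightarrow> real mat) \<Rightarrow> (nat \<Rightarrow> real mat) \<Rightarrow> bool" where
  "lanczos n m A R0 l V Gam Om \<longleftrightarrow>
     V 0 = 0\<^sub>m n m \<and> is_QR n m R0 (V 1) (Gam 0) \<and>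
     (\<forall>k. 1 \<le> k \<and> k < l \<longrightarrow>
        (let W = A * V k - V (k - 1) * (Gam (k - 1))\<^sup>T in
           Om k = (V k)\<^sup>T * W \<and> is_QR n m (W - V k * Om k) (V (k + 1)) (Gam k)))"

text \<open>T_k: symmetric block tridiagonal (k m) x (k m) matrix; diagonal blocks Om 1..Om k,
  block (i+1,i) = Gam i, block (i,i+1) = Gam i ^T (blocks indexed from 1).\<close>
definition Tmat :: "nat \<Rightarrow> (nat \<Rightarrow> real mat) \<Rightarrow> (nat \<Rightarrow> real mat) \<Rightarrow> nat \<Rightarrow> real mat" where
  "Tmat m Gam Om k = mat (k * m) (k * m) (\<lambda>(i, j).
     let bi = i div m + 1; bj = j div m + 1; r = i mod m; c = j mod m in
     if bi = bj then Om bi $$ (r, c)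
     else if bi = bj + 1 then Gam bj $$ (r, c)
     else if bj = bi + 1 then (Gam bi)\<^sup>T $$ (r, c)
     else 0)"

text \<open>[M]_{i,j}: the (i,j) block of size m x m (blocks indexed from 1).\<close>
definition blk :: "nat \<Rightarrow> real mat \<Rightarrow> nat \<Rightarrow> nat \<Rightarrow> real mat" where
  "blk m M i j = mat m m (\<lambda>(r, c). M $$ ((i - 1) * m + r, (j - 1) * m + c))"

primrec Delta :: "(nat \<Rightarrow> real mat) \<Rightarrow> (nat \<Rightarrow> real mat) \<Rightarrow> nat \<Rightarrow> real mat" where
  "Delta Gam Om 0 = Om 0"  (* unused *)
| "Delta Gam Om (Suc j) = (if j = 0 then Om 1
     else Om (Suc j) - Gam j * minv (Delta Gam Om j) * (Gam j)\<^sup>T)"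

primrec Phi :: "(nat \<Rightarrow> real mat) \<Rightarrow> (nat \<Rightarrow> real mat) \<Rightarrow> nat \<Rightarrow> real mat" where
  "Phi Gam Om 0 = Gam 0"
| "Phi Gam Om (Suc j) = (Gam (Suc j) * minv (Delta Gam Om (Suc j))) * Phi Gam Om j"

text \<open>Om^(mu)_{k+1} for k >= 1.\<close>
definition Om_mu :: "nat \<Rightarrow> (nat \<Rightarrow> real mat) \<Rightarrow> (nat \<Rightarrow> real mat) \<Rightarrow> real \<Rightarrow> nat \<Rightarrow> real mat" where
  "Om_mu m Gam Om \<mu> k = \<mu> \<cdot>\<^sub>m 1\<^sub>m m +
     Gam k * blk m (minv (Tmat m Gam Om k - \<mu> \<cdot>\<^sub>m 1\<^sub>m (k * m))) k k * (Gam k)\<^sup>T"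

text \<open>Delta_mu m Gam Om mu k = Delta^(mu)_{k+1}.\<close>
definition Delta_mu :: "nat \<Rightarrow> (nat \<Rightarrow> real mat) \<Rightarrow> (nat \<Rightarrow> real mat) \<Rightarrow> real \<Rightarrow> nat \<Rightarrow> real mat" where
  "Delta_mu m Gam Om \<mu> k = (if k = 0 then \<mu> \<cdot>\<^sub>m 1\<^sub>m m
     else Om_mu m Gam Om \<mu> k - Gam k * minv (Delta Gam Om k) * (Gam k)\<^sup>T)"

definition Ups_mu where
  "Ups_mu m Gam Om \<mu> k = minv (Phi Gam Om k) * minv (Delta_mu m Gam Om \<mu> k) * Phi Gam Om k"

definition Theta_mu where
  "Theta_mu A B X0 m Gam Om \<mu> k =
     ((bcgR A B X0 k)\<^sup>T * bcgR A B X0 k) * Ups_mu m Gam Om \<mu> k"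

end

theory Submission
  imports Defs
begin

lemma massoc:
  "dim_col A = dim_row B \<Longrightarrow> dim_col B = dim_row C \<Longrightarrow> A * B * C = A * (B * (C::'a::semiring_0 mat))"
  by (rule assoc_mult_mat[of A "dim_row A" "dim_col A" B "dim_col B" C "dim_col C"], auto)

lemma mult_smult_r:
  "dim_col A = dim_row B \<Longrightarrow> A * (k \<cdot>\<^sub>m B) = k \<cdot>\<^sub>m (A * (B::'a::comm_semiring_0 mat))"
  by (rule mult_smult_distrib[of A "dim_row A" "dim_col A" B "dim_col B"], auto)

lemma smult_mult_l:
  "dim_col A = dim_row B \<Longrightarrow> (k \<cdot>\<^sub>m A) * B = k \<cdot>\<^sub>m (A * (B::'a::comm_semiring_0 mat))"
  by (rule mult_smult_assoc_mat[of A "dim_row A" "dim_col A" B "dim_col B"], auto)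

lemma mult_add_r:
  "dim_col A = dim_row B \<Longrightarrow> dim_row C = dim_row B \<Longrightarrow> dim_col C = dim_col B \<Longrightarrow>
   A * (B + C) = A * B + A * (C::'a::semiring_0 mat)"
  by (rule mult_add_distrib_mat[of A "dim_row A" "dim_col A" B "dim_col B"], auto)

lemma mult_add_l:
  "dim_col A = dim_row C \<Longrightarrow> dim_row B = dim_row A \<Longrightarrow> dim_col B = dim_col A \<Longrightarrow>
   (A + B) * C = A * C + B * (C::'a::semiring_0 mat)"
  by (rule add_mult_distrib_mat[of A "dim_row A" "dim_col A" B C "dim_col C"], auto)

lemma mult_minus_r:
  "dim_col A = dim_row B \<Longrightarrow> dim_row C = dim_row B \<Longrightarrow> dim_col C = dim_col B \<Longrightarrow>
   A * (B - C) = A * B - A * (C::'a::ring mat)"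
  by (rule mult_minus_distrib_mat[of A "dim_row A" "dim_col A" B "dim_col B"], auto)

lemma mult_minus_l:
  "dim_col A = dim_row C \<Longrightarrow> dim_row B = dim_row A \<Longrightarrow> dim_col B = dim_col A \<Longrightarrow>
   (A - B) * C = A * C - B * (C::'a::ring mat)"
  by (rule minus_mult_distrib_mat[of A "dim_row A" "dim_col A" B C "dim_col C"], auto)

lemma transpose_mult':
  "dim_col A = dim_row B \<Longrightarrow> (A * B)\<^sup>T = B\<^sup>T * (A\<^sup>T :: 'a::comm_semiring_0 mat)"
  by (rule transpose_mult[of A "dim_row A" "dim_col A" B "dim_col B"], auto)

lemma transpose_add':
  "dim_row A = dim_row B \<Longrightarrow> dim_col A = dim_col B \<Longrightarrow> (A + B)\<^sup>T = A\<^sup>T + (B\<^sup>T :: 'a::plus mat)"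
  by (rule transpose_add[of A "dim_row A" "dim_col A"], auto)

lemma transpose_minus':
  "dim_row A = dim_row B \<Longrightarrow> dim_col A = dim_col B \<Longrightarrow> (A - B)\<^sup>T = A\<^sup>T - (B\<^sup>T :: 'a::minus mat)"
  by (rule transpose_minus[of A "dim_row A" "dim_col A"], auto)

lemma transpose_smult': "(k \<cdot>\<^sub>m A)\<^sup>T = k \<cdot>\<^sub>m (A\<^sup>T)"
  by (rule eq_matI, auto)

lemma one_mult': "dim_row A = n \<Longrightarrow> 1\<^sub>m n * A = (A::'a::semiring_1 mat)"
  by (rule left_mult_one_mat[of A n "dim_col A"], auto)

lemma mult_one': "dim_col A = n \<Longrightarrow> A * 1\<^sub>m n = (A::'a::semiring_1 mat)"
  by (rule right_mult_one_mat[of A "dim_row A" n], auto)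

lemma cancel_r:
  assumes "A * B = 1\<^sub>m n" "dim_col A = dim_row B" "dim_col B = dim_row C" "dim_row C = n"
  shows "A * (B * (C::'a::semiring_1 mat)) = C"
proof -
  have "A * (B * C) = (A * B) * C" by (rule massoc[symmetric]) (use assms in auto)
  thus ?thesis using assms by (simp add: one_mult')
qed

lemma minus_zero_mat': "dim_row A = a \<Longrightarrow> dim_col A = b \<Longrightarrow> A - 0\<^sub>m a b = (A :: 'a :: group_add mat)"
  by (intro eq_matI) auto

lemma add_zero_mat': "dim_row A = a \<Longrightarrow> dim_col A = b \<Longrightarrow> A + 0\<^sub>m a b = (A :: 'a :: monoid_add mat)"
  by (intro eq_matI) auto

lemma zero_add_mat': "dim_row A = a \<Longrightarrow> dim_col A = b \<Longrightarrow> 0\<^sub>m a b + A = (A :: 'a :: monoid_add mat)"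
  by (intro eq_matI) auto

lemma mat_split3:
  assumes "X \<in> carrier_mat a b" "Y \<in> carrier_mat a b" "Z \<in> carrier_mat a b"
  shows "X = Y + Z + (X - Y - Z)" "X - Y - Z = W \<Longrightarrow> X = Y + Z + (W::'a::ab_group_add mat)"
  using assms by (auto intro!: eq_matI)

lemma minv_inv:
  assumes A: "A \<in> carrier_mat n n" and d: "det A \<noteq> 0"
  shows "minv A \<in> carrier_mat n n" "A * minv A = 1\<^sub>m n" "minv A * A = 1\<^sub>m n"
proof -
  have U: "A \<in> Units (ring_mat TYPE(real) n undefined)"
    by (rule det_non_zero_imp_unit[OF A d])
  obtain B where B: "mat_inverse A = Some B"
    using mat_inverse(1)[OF A, where b=undefined] U by (cases "mat_inverse A") auto
  from mat_inverse(2)[OF A B] have "A * B = 1\<^sub>m n \<and> B * A = 1\<^sub>m n \<and> B \<in> carrier_mat n n" .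
  moreover have "minv A = B" unfolding minv_def B by simp
  ultimately show "minv A \<in> carrier_mat n n" "A * minv A = 1\<^sub>m n" "minv A * A = 1\<^sub>m n" by auto
qed

lemma minv_cancel:
  assumes A: "A \<in> carrier_mat n n" and d: "det A \<noteq> 0" and C: "dim_row C = n"
  shows "A * (minv A * C) = C" "minv A * (A * C) = C"
  using minv_inv[OF A d] A C by (auto intro: cancel_r)

lemma det_nz_right_inv:
  assumes A: "A \<in> carrier_mat n n" and B: "B \<in> carrier_mat n n" and AB: "A * B = 1\<^sub>m n"
  shows "det (A::real mat) \<noteq> 0"
proof
  assume "det A = 0"
  hence "det (A * B) = 0" using det_mult[OF A B] by simp
  thus False using AB by simp
qed

lemma minv_eq:
  assumes A: "A \<in> carrier_mat n n" and B: "B \<in> carrier_mat n n" and AB: "A * B = 1\<^sub>m n"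
  shows "minv A = B"
proof -
  have d: "det A \<noteq> 0" by (rule det_nz_right_inv[OF A B AB])
  note I = minv_inv[OF A d]
  have "minv A = minv A * (A * B)" using AB I(1) by simp
  also have "\<dots> = (minv A * A) * B" using I(1) A B by simp
  also have "\<dots> = B" using I(3) B by simp
  finally show ?thesis .
qed

lemma det_mult_nz:
  assumes "A \<in> carrier_mat n n" "B \<in> carrier_mat n n" "det A \<noteq> 0" "det (B::real mat) \<noteq> 0"
  shows "det (A * B) \<noteq> 0"
  using det_mult[OF assms(1,2)] assms by simp

lemma minv_mult:
  assumes A: "A \<in> carrier_mat n n" and B: "B \<in> carrier_mat n n"
    and dA: "det A \<noteq> 0" and dB: "det B \<noteq> 0"
  shows "minv (A * B) = minv B * minv A"
proof (rule minv_eq[of _ n])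
  note IA = minv_inv[OF A dA] and IB = minv_inv[OF B dB]
  show "A * B \<in> carrier_mat n n" using A B by simp
  show "minv B * minv A \<in> carrier_mat n n" using IA IB by simp
  have "A * B * (minv B * minv A) = A * ((B * minv B) * minv A)"
    using A B IA(1) IB(1) by (simp add: massoc)
  also have "\<dots> = 1\<^sub>m n" using IA IB A by simp
  finally show "A * B * (minv B * minv A) = 1\<^sub>m n" .
qed

lemma minv_transpose:
  assumes A: "A \<in> carrier_mat n n" and dA: "det A \<noteq> 0"
  shows "minv (A\<^sup>T) = (minv A)\<^sup>T"
proof (rule minv_eq[of _ n])
  note IA = minv_inv[OF A dA]
  show "A\<^sup>T \<in> carrier_mat n n" "(minv A)\<^sup>T \<in> carrier_mat n n" using A IA by auto
  have "A\<^sup>T * (minv A)\<^sup>T = (minv A * A)\<^sup>T" using transpose_mult[OF IA(1) A] by simp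
  thus "A\<^sup>T * (minv A)\<^sup>T = 1\<^sub>m n" using IA by simp
qed

lemma minv_sym:
  assumes A: "A \<in> carrier_mat n n" and dA: "det A \<noteq> 0" and s: "A\<^sup>T = A"
  shows "(minv A)\<^sup>T = minv A"
  using minv_transpose[OF A dA] s by simp

lemma minv_smult:
  assumes A: "A \<in> carrier_mat n n" and dA: "det A \<noteq> 0" and c: "c \<noteq> (0::real)"
  shows "minv (c \<cdot>\<^sub>m A) = (1/c) \<cdot>\<^sub>m minv A"
proof (rule minv_eq[of _ n])
  note IA = minv_inv[OF A dA]
  show "c \<cdot>\<^sub>m A \<in> carrier_mat n n" "(1/c) \<cdot>\<^sub>m minv A \<in> carrier_mat n n" using A IA by auto
  have "c \<cdot>\<^sub>m A * ((1/c) \<cdot>\<^sub>m minv A) = (1/c) \<cdot>\<^sub>m (c \<cdot>\<^sub>m (A * minv A))"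
    using A IA by (simp add: mult_smult_r smult_mult_l)
  also have "\<dots> = 1\<^sub>m n" using c IA by (intro eq_matI) auto
  finally show "c \<cdot>\<^sub>m A * ((1/c) \<cdot>\<^sub>m minv A) = 1\<^sub>m n" .
qed

definition qf :: "real mat \<Rightarrow> real mat \<Rightarrow> real" where
  "qf M X = (X\<^sup>T * M * X) $$ (0,0)"

definition nrm :: "real mat \<Rightarrow> real" where
  "nrm X = (X\<^sup>T * X) $$ (0,0)"

lemma qf_sum: assumes X: "X \<in> carrier_mat p 1" and M: "M \<in> carrier_mat p p"
  shows "qf M X = (\<Sum>i<p. \<Sum>j<p. X $$ (i,0) * M $$ (i,j) * X $$ (j,0))"
proof -
  have "qf M X = (\<Sum>i<p. X $$ (i,0) * (\<Sum>j<p. M $$ (i,j) * X $$ (j,0)))"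
    unfolding qf_def using X M
    by (simp add: scalar_prod_def row_def col_def atLeast0LessThan)
  also have "\<dots> = (\<Sum>i<p. \<Sum>j<p. X $$ (i,0) * M $$ (i,j) * X $$ (j,0))"
    by (simp add: sum_distrib_left mult.assoc)
  finally show ?thesis .
qed

lemma nrm_sum: assumes X: "X \<in> carrier_mat p 1"
  shows "nrm X = (\<Sum>i<p. (X $$ (i,0))\<^sup>2)"
  unfolding nrm_def using X
  by (simp add: scalar_prod_def row_def col_def atLeast0LessThan power2_eq_square)

lemma nrm_ge0: assumes X: "X \<in> carrier_mat p 1" shows "nrm X \<ge> 0"
  unfolding nrm_sum[OF X] by (intro sum_nonneg) auto

lemma nrm_pos: assumes X: "X \<in> carrier_mat p 1" and nz: "X \<noteq> 0\<^sub>m p 1" shows "nrm X > 0"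
proof -
  obtain i where i: "i < p" "X $$ (i,0) \<noteq> 0"
  proof -
    have "\<exists>i<p. X $$ (i,0) \<noteq> 0"
    proof (rule ccontr)
      assume "\<not> ?thesis"
      hence "X = 0\<^sub>m p 1" using X by (intro eq_matI) auto
      thus False using nz by simp
    qed
    thus ?thesis using that by blast
  qed
  have "(X $$ (i,0))\<^sup>2 \<le> (\<Sum>i<p. (X $$ (i,0))\<^sup>2)"
    by (rule member_le_sum) (use i in auto)
  moreover have "(X $$ (i,0))\<^sup>2 > 0" using i by simp
  ultimately show ?thesis unfolding nrm_sum[OF X] by linarith
qed

lemma entry_sq_le_nrm: assumes X: "X \<in> carrier_mat p 1" and i: "i < p"
  shows "(X $$ (i,0))\<^sup>2 \<le> nrm X"
  unfolding nrm_sum[OF X] by (rule member_le_sum) (use i in auto)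

lemma qf_bound: assumes X: "X \<in> carrier_mat p 1" and M: "M \<in> carrier_mat p p"
  shows "\<bar>qf M X\<bar> \<le> (\<Sum>i<p. \<Sum>j<p. \<bar>M $$ (i,j)\<bar>) * nrm X"
proof -
  have "\<bar>qf M X\<bar> \<le> (\<Sum>i<p. \<Sum>j<p. \<bar>X $$ (i,0) * M $$ (i,j) * X $$ (j,0)\<bar>)"
    unfolding qf_sum[OF X M]
    by (rule order_trans[OF sum_abs], rule sum_mono, rule sum_abs)
  also have "\<dots> \<le> (\<Sum>i<p. \<Sum>j<p. \<bar>M $$ (i,j)\<bar> * nrm X)"
  proof (intro sum_mono)
    fix i j assume i: "i \<in> {..<p}" and j: "j \<in> {..<p}"
    have a: "(X $$ (i,0))\<^sup>2 \<le> nrm X" "(X $$ (j,0))\<^sup>2 \<le> nrm X"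
      using entry_sq_le_nrm[OF X] i j by auto
    have "\<bar>X $$ (i,0)\<bar> * \<bar>X $$ (j,0)\<bar> \<le> ((X $$ (i,0))\<^sup>2 + (X $$ (j,0))\<^sup>2) / 2"
    proof -
      have "0 \<le> (\<bar>X $$ (i,0)\<bar> - \<bar>X $$ (j,0)\<bar>)\<^sup>2" by simp
      thus ?thesis by (simp add: power2_eq_square algebra_simps)
    qed
    also have "\<dots> \<le> nrm X" using a by simp
    finally have b: "\<bar>X $$ (i,0)\<bar> * \<bar>X $$ (j,0)\<bar> \<le> nrm X" .
    have "\<bar>X $$ (i,0) * M $$ (i,j) * X $$ (j,0)\<bar> = \<bar>M $$ (i,j)\<bar> * (\<bar>X $$ (i,0)\<bar> * \<bar>X $$ (j,0)\<bar>)"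
      by (simp add: abs_mult)
    also have "\<dots> \<le> \<bar>M $$ (i,j)\<bar> * nrm X" by (rule mult_left_mono[OF b]) simp
    finally show "\<bar>X $$ (i,0) * M $$ (i,j) * X $$ (j,0)\<bar> \<le> \<bar>M $$ (i,j)\<bar> * nrm X" .
  qed
  also have "\<dots> = (\<Sum>i<p. \<Sum>j<p. \<bar>M $$ (i,j)\<bar>) * nrm X"
    by (simp add: sum_distrib_right)
  finally show ?thesis .
qed

definition bil :: "real mat \<Rightarrow> real mat \<Rightarrow> real mat \<Rightarrow> real" where
  "bil M X Y = (X\<^sup>T * M * Y) $$ (0,0)"

lemma qf_bil: "qf M X = bil M X X" unfolding qf_def bil_def ..

lemma bil_sum: assumes X: "X \<in> carrier_mat p 1" and Y: "Y \<in> carrier_mat p 1" and M: "M \<in> carrier_mat p p"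
  shows "bil M X Y = (\<Sum>i<p. \<Sum>j<p. X $$ (i,0) * M $$ (i,j) * Y $$ (j,0))"
proof -
  have "bil M X Y = (\<Sum>i<p. X $$ (i,0) * (\<Sum>j<p. M $$ (i,j) * Y $$ (j,0)))"
    unfolding bil_def using X Y M
    by (simp add: scalar_prod_def row_def col_def atLeast0LessThan)
  also have "\<dots> = (\<Sum>i<p. \<Sum>j<p. X $$ (i,0) * M $$ (i,j) * Y $$ (j,0))"
    by (simp add: sum_distrib_left mult.assoc)
  finally show ?thesis .
qed

lemma bil_sym: assumes X: "X \<in> carrier_mat p 1" and Y: "Y \<in> carrier_mat p 1" and M: "M \<in> carrier_mat p p"
  and s: "M\<^sup>T = M"
  shows "bil M X Y = bil M Y X"
proof -
  have "bil M X Y = (\<Sum>i<p. \<Sum>j<p. X $$ (i,0) * M $$ (i,j) * Y $$ (j,0))" by (rule bil_sum[OF X Y M])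
  also have "\<dots> = (\<Sum>j<p. \<Sum>i<p. X $$ (i,0) * M $$ (i,j) * Y $$ (j,0))" by (rule sum.swap)
  also have "\<dots> = (\<Sum>j<p. \<Sum>i<p. Y $$ (j,0) * M $$ (j,i) * X $$ (i,0))"
  proof (intro sum.cong refl)
    fix i j assume "i \<in> {..<p}" "j \<in> {..<p}"
    hence "M $$ (i,j) = M $$ (j,i)" using arg_cong[OF s, of "\<lambda>N. N $$ (j,i)"] M by auto
    thus "X $$ (i,0) * M $$ (i,j) * Y $$ (j,0) = Y $$ (j,0) * M $$ (j,i) * X $$ (i,0)" by simp
  qed
  also have "\<dots> = bil M Y X" by (rule bil_sum[OF Y X M, symmetric])
  finally show ?thesis .
qed

lemma bil_lin:
  assumes X: "X \<in> carrier_mat p 1" and Y: "Y \<in> carrier_mat p 1" and Z: "Z \<in> carrier_mat p 1"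
    and M: "M \<in> carrier_mat p p"
  shows "bil M (X + Y) Z = bil M X Z + bil M Y Z"
    "bil M Z (X + Y) = bil M Z X + bil M Z Y"
    "bil M (X - Y) Z = bil M X Z - bil M Y Z"
    "bil M Z (X - Y) = bil M Z X - bil M Z Y"
    "bil M (c \<cdot>\<^sub>m X) Z = c * bil M X Z"
    "bil M Z (c \<cdot>\<^sub>m X) = c * bil M Z X"
proof -
  have c: "X + Y \<in> carrier_mat p 1" "X - Y \<in> carrier_mat p 1" "c \<cdot>\<^sub>m X \<in> carrier_mat p 1"
    using X Y by auto
  show "bil M (X + Y) Z = bil M X Z + bil M Y Z"
    "bil M Z (X + Y) = bil M Z X + bil M Z Y"
    "bil M (X - Y) Z = bil M X Z - bil M Y Z"
    "bil M Z (X - Y) = bil M Z X - bil M Z Y"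
    "bil M (c \<cdot>\<^sub>m X) Z = c * bil M X Z"
    "bil M Z (c \<cdot>\<^sub>m X) = c * bil M Z X"
    using X Y Z M c
    by (simp_all only: bil_sum[of _ p], auto simp: algebra_simps sum.distrib sum_subtractf sum_distrib_left)
qed

lemma bil_M_lin:
  assumes X: "X \<in> carrier_mat p 1" and Y: "Y \<in> carrier_mat p 1"
    and M: "M \<in> carrier_mat p p" and N: "N \<in> carrier_mat p p"
  shows "bil (M + N) X Y = bil M X Y + bil N X Y"
    "bil (M - N) X Y = bil M X Y - bil N X Y"
    "bil (c \<cdot>\<^sub>m M) X Y = c * bil M X Y"
proof -
  have c: "M + N \<in> carrier_mat p p" "M - N \<in> carrier_mat p p" "c \<cdot>\<^sub>m M \<in> carrier_mat p p"
    using M N by auto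
  show "bil (M + N) X Y = bil M X Y + bil N X Y"
    "bil (M - N) X Y = bil M X Y - bil N X Y"
    "bil (c \<cdot>\<^sub>m M) X Y = c * bil M X Y"
    using X Y M N c
    by (simp_all only: bil_sum[of _ p], auto simp: algebra_simps sum.distrib sum_subtractf sum_distrib_left)
qed

lemma bil_one: assumes X: "X \<in> carrier_mat p 1" and Y: "Y \<in> carrier_mat p 1"
  shows "bil (1\<^sub>m p) X Y = (X\<^sup>T * Y) $$ (0,0)"
  unfolding bil_def using X Y by (simp add: one_mult')

lemma nrm_bil: "X \<in> carrier_mat p 1 \<Longrightarrow> nrm X = bil (1\<^sub>m p) X X"
  by (simp add: bil_one nrm_def)

lemma bil_mult:
  assumes U: "U \<in> carrier_mat p q" and X: "X \<in> carrier_mat q 1" and Y: "Y \<in> carrier_mat q 1"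
    and M: "M \<in> carrier_mat p p"
  shows "bil M (U * X) (U * Y) = bil (U\<^sup>T * M * U) X Y"
  unfolding bil_def using U X Y M by (simp add: transpose_mult' massoc)

lemma quad_nonneg_disc:
  fixes a b c :: real
  assumes h: "\<And>t. 0 \<le> a + 2 * b * t + c * t\<^sup>2" and c: "c \<ge> 0"
  shows "b\<^sup>2 \<le> a * c"
proof (cases "c = 0")
  case True
  have "b = 0"
  proof (rule ccontr)
    assume b: "b \<noteq> 0"
    have "0 \<le> a + 2 * b * (- (\<bar>a\<bar> + 1) / (2 * b))" using h[of "- (\<bar>a\<bar> + 1) / (2 * b)"] True by simp
    also have "\<dots> = a - (\<bar>a\<bar> + 1)" using b by (simp add: field_simps)
    finally show False by linarith
  qed
  thus ?thesis using True by simp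
next
  case False
  hence cp: "c > 0" using c by simp
  have "0 \<le> a + 2 * b * (- b / c) + c * (- b / c)\<^sup>2" by (rule h)
  also have "\<dots> = a - b\<^sup>2 / c" using cp by (simp add: field_simps power2_eq_square)
  finally have "b\<^sup>2 / c \<le> a" by simp
  thus ?thesis using cp by (simp add: field_simps mult.commute)
qed

lemma cauchy_schwarz_psd:
  assumes X: "X \<in> carrier_mat p 1" and Y: "Y \<in> carrier_mat p 1" and M: "M \<in> carrier_mat p p"
    and s: "M\<^sup>T = M" and psd: "\<And>Z. Z \<in> carrier_mat p 1 \<Longrightarrow> qf M Z \<ge> 0"
  shows "(bil M X Y)\<^sup>2 \<le> qf M X * qf M Y"
proof -
  have "0 \<le> qf M X + 2 * bil M X Y * t + qf M Y * t\<^sup>2" for t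
  proof -
    have "0 \<le> qf M (X + t \<cdot>\<^sub>m Y)" using psd X Y by simp
    also have "\<dots> = qf M X + 2 * bil M X Y * t + qf M Y * t\<^sup>2"
      unfolding qf_bil using X Y M bil_sym[OF X Y M s]
      by (simp add: bil_lin[of _ p] power2_eq_square algebra_simps)
    finally show ?thesis .
  qed
  from quad_nonneg_disc[OF this] psd[OF Y] show ?thesis by simp
qed

definition mcol :: "real vec \<Rightarrow> real mat" where
  "mcol x = mat (dim_vec x) 1 (\<lambda>(i,j). x $ i)"

lemma mcol_carrier[simp]: "x \<in> carrier_vec p \<Longrightarrow> mcol x \<in> carrier_mat p 1"
  unfolding mcol_def by auto

lemma qf_mcol: assumes x: "x \<in> carrier_vec p" and M: "M \<in> carrier_mat p p"
  shows "qf M (mcol x) = x \<bullet> (M *\<^sub>v x)"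
proof -
  have "qf M (mcol x) = (\<Sum>i<p. (\<Sum>k<p. x $ k * M $$ (k,i)) * x $ i)"
    unfolding qf_def mcol_def using x M
    by (simp add: scalar_prod_def row_def col_def atLeast0LessThan)
  also have "\<dots> = (\<Sum>i<p. \<Sum>k<p. x $ k * M $$ (k,i) * x $ i)"
    by (simp add: sum_distrib_right)
  also have "\<dots> = (\<Sum>k<p. \<Sum>i<p. x $ k * M $$ (k,i) * x $ i)"
    by (rule sum.swap)
  also have "\<dots> = (\<Sum>i<p. x $ i * (\<Sum>j<p. M $$ (i,j) * x $ j))"
    by (simp add: sum_distrib_left mult.assoc)
  also have "\<dots> = x \<bullet> (M *\<^sub>v x)"
    using x M by (simp add: scalar_prod_def row_def atLeast0LessThan)
  finally show ?thesis .
qed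

lemma mcol_nz: assumes x: "x \<in> carrier_vec p" and nz: "x \<noteq> 0\<^sub>v p" shows "mcol x \<noteq> 0\<^sub>m p 1"
proof
  assume "mcol x = 0\<^sub>m p 1"
  hence "\<forall>i<p. x $ i = 0"
  proof (intro allI impI)
    fix i assume e: "mcol x = 0\<^sub>m p 1" and i: "i < p"
    have "mcol x $$ (i,0) = x $ i" using x i unfolding mcol_def by auto
    thus "x $ i = 0" using e i by simp
  qed
  hence "x = 0\<^sub>v p" using x by (intro eq_vecI) auto
  thus False using nz by simp
qed

definition cvec :: "real mat \<Rightarrow> real vec" where "cvec X = col X 0"

lemma mcol_cvec: "X \<in> carrier_mat p 1 \<Longrightarrow> mcol (cvec X) = X"
  unfolding mcol_def cvec_def by (intro eq_matI) auto

lemma cvec_carrier: "X \<in> carrier_mat p 1 \<Longrightarrow> cvec X \<in> carrier_vec p"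
  unfolding cvec_def by auto

lemma cvec_nz: "X \<in> carrier_mat p 1 \<Longrightarrow> X \<noteq> 0\<^sub>m p 1 \<Longrightarrow> cvec X \<noteq> 0\<^sub>v p"
proof
  assume X: "X \<in> carrier_mat p 1" and nz: "X \<noteq> 0\<^sub>m p 1" and v: "cvec X = 0\<^sub>v p"
  have "X = 0\<^sub>m p 1"
  proof (rule eq_matI)
    fix i j assume "i < dim_row (0\<^sub>m p 1)" "j < dim_col (0\<^sub>m p 1)"
    hence ij: "i < p" "j = 0" by auto
    have "cvec X $ i = 0" using v ij by simp
    thus "X $$ (i,j) = 0\<^sub>m p 1 $$ (i,j)" using X ij unfolding cvec_def by auto
  qed (use X in auto)
  thus False using nz by simp
qed

definition pdm :: "nat \<Rightarrow> real mat \<Rightarrow> bool" where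
  "pdm p M \<longleftrightarrow> M \<in> carrier_mat p p \<and> M\<^sup>T = M \<and>
     (\<forall>X \<in> carrier_mat p 1. X \<noteq> 0\<^sub>m p 1 \<longrightarrow> qf M X > 0)"

lemma spd_pdm: "spd p M \<longleftrightarrow> pdm p M"
proof
  assume s: "spd p M"
  hence M: "M \<in> carrier_mat p p" unfolding spd_def by auto
  show "pdm p M" unfolding pdm_def
  proof (intro conjI ballI impI)
    fix X :: "real mat" assume X: "X \<in> carrier_mat p 1" and nz: "X \<noteq> 0\<^sub>m p 1"
    have "qf M X = qf M (mcol (cvec X))" using mcol_cvec[OF X] by simp
    also have "\<dots> = cvec X \<bullet> (M *\<^sub>v cvec X)" by (rule qf_mcol[OF cvec_carrier[OF X] M])
    finally show "qf M X > 0" using s cvec_carrier[OF X] cvec_nz[OF X nz] unfolding spd_def by auto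
  qed (use s in \<open>auto simp: spd_def\<close>)
next
  assume s: "pdm p M"
  hence M: "M \<in> carrier_mat p p" unfolding pdm_def by auto
  show "spd p M" unfolding spd_def
  proof (intro conjI ballI impI)
    fix x :: "real vec" assume x: "x \<in> carrier_vec p" and nz: "x \<noteq> 0\<^sub>v p"
    show "x \<bullet> (M *\<^sub>v x) > 0" using s mcol_nz[OF x nz] qf_mcol[OF x M] mcol_carrier[OF x]
      unfolding pdm_def by auto
  qed (use s in \<open>auto simp: pdm_def\<close>)
qed

lemma qf_zero: "M \<in> carrier_mat p p \<Longrightarrow> qf M (0\<^sub>m p 1) = 0"
  by (subst qf_sum[of _ p]) auto

lemma nrm_zero: "nrm (0\<^sub>m p 1) = 0" unfolding nrm_def by simp

lemma carrier0_zero: "X \<in> carrier_mat 0 1 \<Longrightarrow> X = 0\<^sub>m 0 1"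
  by (intro eq_matI) auto

lemma finite_eigenvalues: assumes A: "(A::real mat) \<in> carrier_mat n n"
  shows "finite {ev. eigenvalue A ev}"
proof -
  have "char_poly A \<noteq> 0" using degree_monic_char_poly[OF A] by auto
  hence "finite {x. poly (char_poly A) x = 0}" by (rule poly_roots_finite)
  moreover have "{ev. eigenvalue A ev} \<subseteq> {x. poly (char_poly A) x = 0}"
    using eigenvalue_root_char_poly[OF A] by auto
  ultimately show ?thesis by (rule finite_subset[rotated])
qed

lemma qf_char_matrix: assumes A: "A \<in> carrier_mat n n" and X: "X \<in> carrier_mat n 1"
  shows "qf (char_matrix A s) X = qf A X - s * nrm X"
  unfolding char_matrix_def qf_bil nrm_bil[OF X] using A X
  by (simp add: bil_M_lin[of _ n])

lemma spectral_pd: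
  assumes A: "A \<in> carrier_mat n n" and sym: "A\<^sup>T = A" and mu: "\<mu> < lambda_min A"
    and X: "X \<in> carrier_mat n 1" and nz: "X \<noteq> 0\<^sub>m n 1"
  shows "qf A X > \<mu> * nrm X"
proof (cases "n = 0")
  case True
  thus ?thesis using X nz carrier0_zero by auto
next
  case False
  hence n: "n > 0" by simp
  define T where "T = {t. \<forall>X\<in>carrier_mat n 1. X \<noteq> 0\<^sub>m n 1 \<longrightarrow> qf A X > t * nrm X}"
  define c where "c = (\<Sum>i<n. \<Sum>j<n. \<bar>A $$ (i,j)\<bar>)"
  have bnd: "\<bar>qf A Y\<bar> \<le> c * nrm Y" if "Y \<in> carrier_mat n 1" for Y
    unfolding c_def by (rule qf_bound[OF that A])
  have low: "- c - 1 \<in> T" unfolding T_def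
  proof (intro CollectI ballI impI)
    fix Y :: "real mat" assume Y: "Y \<in> carrier_mat n 1" and "Y \<noteq> 0\<^sub>m n 1"
    hence p: "nrm Y > 0" by (rule nrm_pos)
    have "- c * nrm Y \<le> qf A Y" using bnd[OF Y] by linarith
    thus "qf A Y > (- c - 1) * nrm Y" using p by (simp add: algebra_simps)
  qed
  define E where "E = mat n 1 (\<lambda>(i,j). if i = 0 then 1 else (0::real))"
  have E: "E \<in> carrier_mat n 1" unfolding E_def by auto
  have Enz: "E \<noteq> 0\<^sub>m n 1"
  proof
    assume "E = 0\<^sub>m n 1"
    hence "E $$ (0,0) = 0" using n by simp
    thus False using n unfolding E_def by simp
  qed
  have bdd: "bdd_above T"
  proof (rule bdd_aboveI)
    fix t assume "t \<in> T"
    hence "qf A E > t * nrm E" unfolding T_def using E Enz by auto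
    moreover have "qf A E \<le> c * nrm E" using bnd[OF E] by linarith
    moreover have "nrm E > 0" by (rule nrm_pos[OF E Enz])
    ultimately have "t * nrm E < c * nrm E" by linarith
    thus "t \<le> c" using \<open>nrm E > 0\<close> by (simp add: mult_less_cancel_right)
  qed
  have down: "t' \<in> T" if "t \<in> T" "t' \<le> t" for t t'
    unfolding T_def
  proof (intro CollectI ballI impI)
    fix Y :: "real mat" assume Y: "Y \<in> carrier_mat n 1" and nzY: "Y \<noteq> 0\<^sub>m n 1"
    have "qf A Y > t * nrm Y" using that(1) Y nzY unfolding T_def by auto
    moreover have "t' * nrm Y \<le> t * nrm Y" using that(2) nrm_ge0[OF Y] by (rule mult_right_mono)
    ultimately show "qf A Y > t' * nrm Y" by linarith
  qed
  define s where "s = Sup T"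
  have Tne: "T \<noteq> {}" using low by auto
  have ge: "qf A Y \<ge> s * nrm Y" if Y: "Y \<in> carrier_mat n 1" for Y
  proof (cases "Y = 0\<^sub>m n 1")
    case True thus ?thesis using qf_zero[OF A] nrm_zero[of n] by simp
  next
    case False
    hence p: "nrm Y > 0" by (rule nrm_pos[OF Y])
    show ?thesis
    proof (rule ccontr)
      assume "\<not> ?thesis"
      hence "qf A Y / nrm Y < s" using p by (simp add: field_simps)
      then obtain t where t: "t \<in> T" "qf A Y / nrm Y < t"
        unfolding s_def using less_cSup_iff[OF Tne bdd] by auto
      have "qf A Y > t * nrm Y" using t(1) Y False unfolding T_def by auto
      moreover have "qf A Y < t * nrm Y" using t(2) p by (simp add: field_simps)
      ultimately show False by simp
    qed
  qed
  define N where "N = char_matrix A s"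
  have N: "N \<in> carrier_mat n n" unfolding N_def using A by simp
  have Nsym: "N\<^sup>T = N" unfolding N_def char_matrix_def using A sym
    by (simp add: transpose_add' transpose_smult')
  have qN: "qf N Y = qf A Y - s * nrm Y" if "Y \<in> carrier_mat n 1" for Y
    unfolding N_def by (rule qf_char_matrix[OF A that])
  have Npsd: "qf N Y \<ge> 0" if "Y \<in> carrier_mat n 1" for Y using qN[OF that] ge[OF that] by simp
  have detN: "det N = 0"
  proof (rule ccontr)
    assume d: "det N \<noteq> 0"
    note NI = minv_inv[OF N d]
    define Ni where "Ni = minv N"
    have Ni: "Ni \<in> carrier_mat n n" "N * Ni = 1\<^sub>m n" "Ni * N = 1\<^sub>m n" using NI unfolding Ni_def by auto
    have Nisym: "Ni\<^sup>T = Ni" unfolding Ni_def by (rule minv_sym[OF N d Nsym])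
    define c' where "c' = (\<Sum>i<n. \<Sum>j<n. \<bar>Ni $$ (i,j)\<bar>)"
    have key: "nrm Y \<le> c' * qf N Y" if Y: "Y \<in> carrier_mat n 1" and nzY: "Y \<noteq> 0\<^sub>m n 1" for Y
    proof -
      have p: "nrm Y > 0" by (rule nrm_pos[OF Y nzY])
      define Z where "Z = Ni * Y"
      have Z: "Z \<in> carrier_mat n 1" unfolding Z_def using Ni Y by simp
      have b: "bil N Y Z = nrm Y"
      proof -
        have "N * (Ni * Y) = Y" using Ni Y N by (intro cancel_r[of _ _ n]) auto
        thus ?thesis unfolding bil_def Z_def nrm_def using Y N Ni by (simp add: massoc)
      qed
      have q: "qf N Z = qf Ni Y"
      proof -
        have "N * (Ni * Y) = Y" using Ni Y N by (intro cancel_r[of _ _ n]) auto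
        thus ?thesis unfolding qf_def Z_def using Y N Ni Nisym by (simp add: massoc transpose_mult')
      qed
      have "(nrm Y)\<^sup>2 \<le> qf N Y * qf N Z"
        using cauchy_schwarz_psd[OF Y Z N Nsym Npsd] b by simp
      also have "\<dots> \<le> qf N Y * (c' * nrm Y)"
      proof (rule mult_left_mono)
        show "qf N Z \<le> c' * nrm Y" using q qf_bound[OF Y Ni(1)] unfolding c'_def by linarith
      qed (rule Npsd[OF Y])
      finally have "nrm Y * nrm Y \<le> nrm Y * (c' * qf N Y)" by (simp add: power2_eq_square algebra_simps)
      thus ?thesis using p by simp
    qed
    have cp: "c' > 0"
    proof -
      have "nrm E \<le> c' * qf N E" by (rule key[OF E Enz])
      moreover have "nrm E > 0" by (rule nrm_pos[OF E Enz])
      moreover have "c' \<ge> 0" unfolding c'_def by (intro sum_nonneg) auto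
      ultimately show ?thesis by (cases "c' = 0") auto
    qed
    have "s + 1 / (2 * c') \<in> T" unfolding T_def
    proof (intro CollectI ballI impI)
      fix Y :: "real mat" assume Y: "Y \<in> carrier_mat n 1" and nzY: "Y \<noteq> 0\<^sub>m n 1"
      have p: "nrm Y > 0" by (rule nrm_pos[OF Y nzY])
      have "nrm Y / c' \<le> qf N Y" using key[OF Y nzY] cp by (simp add: field_simps)
      moreover have "nrm Y / (2 * c') < nrm Y / c'" using p cp by (simp add: field_simps)
      ultimately have "(1 / (2 * c')) * nrm Y < qf N Y" by simp
      thus "qf A Y > (s + 1 / (2 * c')) * nrm Y" using qN[OF Y] by (simp add: algebra_simps)
    qed
    hence "s + 1 / (2 * c') \<le> s" unfolding s_def by (rule cSup_upper[OF _ bdd])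
    thus False using cp by simp
  qed
  have "eigenvalue A s" using detN eigenvalue_det[OF A] unfolding N_def by simp
  hence "lambda_min A \<le> s" unfolding lambda_min_def
    by (intro Min_le finite_eigenvalues[OF A]) simp
  hence "\<mu> < s" using mu by simp
  then obtain t where t: "t \<in> T" "\<mu> < t" unfolding s_def using less_cSup_iff[OF Tne bdd] by auto
  have "\<mu> \<in> T" by (rule down[OF t(1)]) (use t in simp)
  thus ?thesis using X nz unfolding T_def by auto
qed

lemmas mdist = mult_add_r mult_add_l mult_minus_r mult_minus_l transpose_mult' transpose_add'
  transpose_minus' mult_smult_r smult_mult_l transpose_smult'

locale LZ =
  fixes n m l :: nat and A R0 :: "real mat" and V Gam Om :: "nat \<Rightarrow> real mat"
  assumes A: "A \<in> carrier_mat n n" and Asym: "A\<^sup>T = A"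
    and Apd: "pdm n A"
    and R0: "R0 \<in> carrier_mat n m"
    and lz: "lanczos n m A R0 l V Gam Om"
    and l1: "1 \<le> l"
begin

lemma V0: "V 0 = 0\<^sub>m n m" using lz unfolding lanczos_def by auto

lemma QR1: "is_QR n m R0 (V 1) (Gam 0)" using lz unfolding lanczos_def by auto

lemma QRk: assumes "1 \<le> k" "k < l"
  shows "Om k = (V k)\<^sup>T * (A * V k - V (k - 1) * (Gam (k - 1))\<^sup>T)"
    "is_QR n m (A * V k - V (k - 1) * (Gam (k - 1))\<^sup>T - V k * Om k) (V (k + 1)) (Gam k)"
  using lz assms unfolding lanczos_def Let_def by auto

lemma Vc: "k \<le> l \<Longrightarrow> V k \<in> carrier_mat n m"
proof (induct k)
  case 0 thus ?case using V0 by simp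
next
  case (Suc k)
  show ?case
  proof (cases k)
    case 0 thus ?thesis using QR1 unfolding is_QR_def by simp
  next
    case (Suc k') 
    hence "1 \<le> k" "k < l" using Suc.prems by auto
    from QRk(2)[OF this] show ?thesis unfolding is_QR_def by simp
  qed
qed

lemma Gc: "k < l \<Longrightarrow> Gam k \<in> carrier_mat m m"
proof (cases k)
  case 0 thus ?thesis using QR1 unfolding is_QR_def by simp
next
  case (Suc k')
  assume "k < l"
  hence "1 \<le> k" "k < l" using Suc by auto
  from QRk(2)[OF this] show ?thesis unfolding is_QR_def by simp
qed

lemma Oc: assumes "1 \<le> k" "k < l" shows "Om k \<in> carrier_mat m m"
proof -
  have "V k \<in> carrier_mat n m" "V (k - 1) \<in> carrier_mat n m" "Gam (k - 1) \<in> carrier_mat m m"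
    using assms by (auto intro!: Vc Gc)
  note c = this
  have e: "Om k = (V k)\<^sup>T * (A * V k - V (k - 1) * (Gam (k - 1))\<^sup>T)" by (rule QRk(1)[OF assms])
  show ?thesis unfolding e using c A by (intro carrier_matI) simp_all
qed

lemma VTV: assumes "1 \<le> k" "k \<le> l" shows "(V k)\<^sup>T * V k = 1\<^sub>m m"
proof (cases k)
  case 0 thus ?thesis using assms by simp
next
  case (Suc k')
  show ?thesis
  proof (cases k')
    case 0 thus ?thesis using QR1 Suc unfolding is_QR_def by simp
  next
    case (Suc k'')
    hence "1 \<le> k'" "k' < l" using assms \<open>k = Suc k'\<close> by auto
    from QRk(2)[OF this] show ?thesis unfolding is_QR_def using \<open>k = Suc k'\<close> by simp
  qed
qed

lemma R0_QR: "R0 = V 1 * Gam 0" using QR1 unfolding is_QR_def by simp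

definition OmT where "OmT k = (V k)\<^sup>T * A * V k"

definition F where "F j = A * V j - V (j - 1) * (Gam (j - 1))\<^sup>T - V j * OmT j"

lemma OmTc: "k \<le> l \<Longrightarrow> OmT k \<in> carrier_mat m m"
  unfolding OmT_def using Vc[of k] A by (intro carrier_matI) simp_all

lemma OmT_sym: "k \<le> l \<Longrightarrow> (OmT k)\<^sup>T = OmT k"
  unfolding OmT_def using Vc[of k] A Asym by (simp add: transpose_mult' massoc)

lemma Fc: assumes "1 \<le> j" "j \<le> l" shows "F j \<in> carrier_mat n m"
proof -
  have "V j \<in> carrier_mat n m" "V (j - 1) \<in> carrier_mat n m" "Gam (j - 1) \<in> carrier_mat m m"
    "OmT j \<in> carrier_mat m m" using assms by (auto intro!: Vc Gc OmTc)
  thus ?thesis unfolding F_def using A by (intro carrier_matI) simp_all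
qed

lemma AV_F: assumes "1 \<le> j" "j \<le> l"
  shows "A * V j = V (j - 1) * (Gam (j - 1))\<^sup>T + V j * OmT j + F j"
proof -
  have "V j \<in> carrier_mat n m" "V (j - 1) \<in> carrier_mat n m" "Gam (j - 1) \<in> carrier_mat m m"
    "OmT j \<in> carrier_mat m m" using assms by (auto intro!: Vc Gc OmTc)
  thus ?thesis unfolding F_def apply - apply (rule mat_split3(1)[of _ n m]) using A by simp_all
qed

lemma TT: assumes "1 \<le> j" "j < l"
  shows "V (j + 1) * Gam j = A * V j - V (j - 1) * (Gam (j - 1))\<^sup>T - V j * Om j"
  using QRk(2)[OF assms] unfolding is_QR_def by simp

definition ON where "ON j \<longleftrightarrow> (\<forall>i i'. 1 \<le> i \<longrightarrow> i \<le> j \<longrightarrow> 1 \<le> i' \<longrightarrow> i' \<le> j \<longrightarrow>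
   (V i)\<^sup>T * V i' = (if i = i' then 1\<^sub>m m else 0\<^sub>m m m))"

lemma ON_mono: "ON j \<Longrightarrow> j' \<le> j \<Longrightarrow> ON j'" unfolding ON_def by auto

lemma ON_D: "ON j \<Longrightarrow> 1 \<le> i \<Longrightarrow> i \<le> j \<Longrightarrow> 1 \<le> i' \<Longrightarrow> i' \<le> j \<Longrightarrow> i \<noteq> i' \<Longrightarrow>
  (V i)\<^sup>T * V i' = 0\<^sub>m m m"
  unfolding ON_def by auto

lemma V0T: "X \<in> carrier_mat n p \<Longrightarrow> (V 0)\<^sup>T * X = 0\<^sub>m m p"
  using V0 by simp

lemma VT_prev: assumes "ON j" "1 \<le> i" "i \<le> j" "j \<le> l" shows "(V i)\<^sup>T * V (i - 1) = 0\<^sub>m m m"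
proof (cases "i = 1")
  case True thus ?thesis using V0 Vc[of 1] assms by simp
next
  case False thus ?thesis using ON_D[OF assms(1), of i "i - 1"] assms by auto
qed

lemma Om_eq: assumes "ON j" "1 \<le> i" "i \<le> j" "j \<le> l" "i < l" shows "Om i = OmT i"
proof -
  have c: "V i \<in> carrier_mat n m" "V (i - 1) \<in> carrier_mat n m" "Gam (i - 1) \<in> carrier_mat m m"
    using assms by (auto intro!: Vc Gc)
  have "Om i = (V i)\<^sup>T * (A * V i) - (V i)\<^sup>T * V (i - 1) * (Gam (i - 1))\<^sup>T"
    using QRk(1)[of i] assms c A by (simp add: mult_minus_r massoc)
  also have "\<dots> = OmT i" using VT_prev[OF assms(1-3)] c A assms unfolding OmT_def
    by (simp add: massoc minus_zero_mat')
  finally show ?thesis .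
qed

lemma F_eq: assumes "ON j" "1 \<le> i" "i \<le> j" "j \<le> l" "i < l" shows "F i = V (i + 1) * Gam i"
  using TT[of i] Om_eq[OF assms] assms unfolding F_def by simp

end

lemma minv_carrier: assumes "M \<in> carrier_mat p p" shows "minv M \<in> carrier_mat p p"
proof (cases "mat_inverse M")
  case None thus ?thesis unfolding minv_def using assms by simp
next
  case (Some N) thus ?thesis unfolding minv_def using mat_inverse(2)[OF assms Some] by simp
qed

lemma massoc_subst: "dim_col A = dim_row B \<Longrightarrow> dim_col B = dim_row C \<Longrightarrow> A * B = D \<Longrightarrow>
  A * (B * C) = D * (C :: 'a :: semiring_0 mat)"
  using massoc[of A B C] by simp

lemma lin1: assumes "a \<in> carrier_mat p q" "b \<in> carrier_mat p q" "c \<in> carrier_mat p q" "d \<in> carrier_mat p q"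
  shows "a + b + c - (a + d) = b - d + (c::real mat)"
  using assms by (intro eq_matI) auto

lemma cancel_right_zero:
  fixes X G :: "real mat"
  assumes X: "X \<in> carrier_mat p q" and G: "G \<in> carrier_mat q q" and d: "det G \<noteq> 0"
    and e: "X * G = 0\<^sub>m p q"
  shows "X = 0\<^sub>m p q"
proof -
  note I = minv_inv[OF G d]
  have "X = X * (G * minv G)" using I X by (simp add: mult_one')
  also have "\<dots> = (X * G) * minv G" using X G I by (simp add: massoc)
  also have "\<dots> = 0\<^sub>m p q" unfolding e using I by simp
  finally show ?thesis .
qed

lemma pdm_det: assumes "pdm p M" shows "det M \<noteq> 0"
proof
  assume d: "det M = 0"
  have M: "M \<in> carrier_mat p p" using assms unfolding pdm_def by auto
  obtain v where v: "v \<in> carrier_vec p" "v \<noteq> 0\<^sub>v p" "M *\<^sub>v v = 0\<^sub>v p"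
    using d det_0_iff_vec_prod_zero[OF M] by auto
  have "v \<bullet> (M *\<^sub>v v) > 0" using assms v unfolding spd_pdm[symmetric] spd_def by auto
  thus False using v by simp
qed

lemma pdm_carrier: "pdm p M \<Longrightarrow> M \<in> carrier_mat p p" unfolding pdm_def by auto
lemma pdm_sym: "pdm p M \<Longrightarrow> M\<^sup>T = M" unfolding pdm_def by auto

context LZ begin

lemma Fperp: assumes on: "ON j" and j: "1 \<le> j" "j \<le> l" and i: "1 \<le> i" "i \<le> j"
  shows "(V i)\<^sup>T * F j = 0\<^sub>m m m"
proof -
  have cj: "V j \<in> carrier_mat n m" "V (j - 1) \<in> carrier_mat n m" "Gam (j - 1) \<in> carrier_mat m m"
    "OmT j \<in> carrier_mat m m" "V i \<in> carrier_mat n m"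
    using j i by (auto intro!: Vc Gc OmTc)
  have e1: "(V i)\<^sup>T * F j = (V i)\<^sup>T * (A * V j) - (V i)\<^sup>T * (V (j - 1) * (Gam (j - 1))\<^sup>T) - (V i)\<^sup>T * (V j * OmT j)"
    unfolding F_def using cj A by (simp add: mult_minus_r)
  show ?thesis
  proof (cases "i = j")
    case True
    have a: "(V i)\<^sup>T * (A * V j) = OmT j" unfolding OmT_def True using cj A by (simp add: massoc)
    have b: "(V i)\<^sup>T * (V (j - 1) * (Gam (j - 1))\<^sup>T) = 0\<^sub>m m m"
      using massoc_subst[OF _ _ VT_prev[OF on j(1) order.refl j(2)]] True cj by simp
    have c: "(V i)\<^sup>T * (V j * OmT j) = OmT j"
      using massoc_subst[OF _ _ VTV[OF j]] True cj by (simp add: one_mult')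
    show ?thesis unfolding e1 a b c using cj by (intro eq_matI) auto
  next
    case False
    hence ij: "i < j" using i by simp
    have c: "(V i)\<^sup>T * (V j * OmT j) = 0\<^sub>m m m"
      using massoc_subst[OF _ _ ON_D[OF on i(1) i(2) j(1) order.refl False]] cj by simp
    have ci: "V (i - 1) \<in> carrier_mat n m" "Gam (i - 1) \<in> carrier_mat m m" "OmT i \<in> carrier_mat m m"
      "Gam i \<in> carrier_mat m m" "V (i + 1) \<in> carrier_mat n m"
      using i j ij by (auto intro!: Vc Gc OmTc)
    have Fi: "F i = V (i + 1) * Gam i" by (rule F_eq[OF on i(1) _ j(2)]) (use ij j in auto)
    have AVi: "A * V i = V (i - 1) * (Gam (i - 1))\<^sup>T + V i * OmT i + V (i + 1) * Gam i"
      using AV_F[of i] i j ij Fi by simp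
    have VimVj: "(V (i - 1))\<^sup>T * V j = 0\<^sub>m m m"
    proof (cases "i = 1")
      case True thus ?thesis using V0 cj by simp
    next
      case False thus ?thesis using ON_D[OF on, of "i - 1" j] i ij j by auto
    qed
    have ViVj: "(V i)\<^sup>T * V j = 0\<^sub>m m m" using ON_D[OF on i(1) i(2) j(1) order.refl False] .
    have a: "(V i)\<^sup>T * (A * V j) = (A * V i)\<^sup>T * V j"
      using cj A Asym by (simp add: transpose_mult' massoc)
    also have "\<dots> = Gam (i - 1) * ((V (i - 1))\<^sup>T * V j) + (OmT i)\<^sup>T * ((V i)\<^sup>T * V j)
         + (Gam i)\<^sup>T * ((V (i + 1))\<^sup>T * V j)"
      unfolding AVi using cj ci by (simp add: mdist massoc)
    finally have a: "(V i)\<^sup>T * (A * V j) = (Gam i)\<^sup>T * ((V (i + 1))\<^sup>T * V j)"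
      unfolding VimVj ViVj using cj ci by (simp add: zero_add_mat')
    show ?thesis
    proof (cases "i + 1 = j")
      case True
      have b: "(V i)\<^sup>T * (V (j - 1) * (Gam (j - 1))\<^sup>T) = (Gam i)\<^sup>T"
      proof -
        have ji: "j - 1 = i" using True by simp
        show ?thesis unfolding ji using massoc_subst[OF _ _ VTV[OF i(1), of]] cj ci j ij
          by (simp add: one_mult')
      qed
      have a': "(V i)\<^sup>T * (A * V j) = (Gam i)\<^sup>T"
        unfolding a using VTV[OF j] True ci by (simp add: mult_one')
      show ?thesis unfolding e1 a' b c using ci by (intro eq_matI) auto
    next
      case False
      hence ne: "i + 1 \<noteq> j" .
      have "(V (i + 1))\<^sup>T * V j = 0\<^sub>m m m" using ON_D[OF on, of "i + 1" j] ij ne j by auto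
      hence a': "(V i)\<^sup>T * (A * V j) = 0\<^sub>m m m" unfolding a using ci by simp
      have "(V i)\<^sup>T * V (j - 1) = 0\<^sub>m m m" using ON_D[OF on i(1), of "j - 1"] ij ne j by auto
      hence b: "(V i)\<^sup>T * (V (j - 1) * (Gam (j - 1))\<^sup>T) = 0\<^sub>m m m"
        using massoc_subst[of "(V i)\<^sup>T" "V (j - 1)" "(Gam (j - 1))\<^sup>T"] cj by simp
      show ?thesis unfolding e1 a' b c by (intro eq_matI) auto
    qed
  qed
qed

lemma Vnext_perp: assumes on: "ON j" and j: "1 \<le> j" "j < l" and d: "det (Gam j) \<noteq> 0"
  shows "ON (j + 1)"
proof -
  have cj: "V (j + 1) \<in> carrier_mat n m" "Gam j \<in> carrier_mat m m" using j by (auto intro!: Vc Gc)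
  have perp: "(V i)\<^sup>T * V (j + 1) = 0\<^sub>m m m" if i: "1 \<le> i" "i \<le> j" for i
  proof (rule cancel_right_zero[OF _ cj(2) d])
    have ci: "V i \<in> carrier_mat n m" using i j by (auto intro!: Vc)
    show "(V i)\<^sup>T * V (j + 1) \<in> carrier_mat m m" using ci cj by simp
    have "(V i)\<^sup>T * V (j + 1) * Gam j = (V i)\<^sup>T * F j"
      using F_eq[OF on j(1) order.refl _ j(2)] j ci cj by (simp add: massoc)
    also have "\<dots> = 0\<^sub>m m m" by (rule Fperp[OF on j(1) _ i]) (use j in simp)
    finally show "(V i)\<^sup>T * V (j + 1) * Gam j = 0\<^sub>m m m" .
  qed
  show ?thesis unfolding ON_def
  proof (intro allI impI)
    fix i i' assume a: "1 \<le> i" "i \<le> j + 1" "1 \<le> i'" "i' \<le> j + 1"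
    show "(V i)\<^sup>T * V i' = (if i = i' then 1\<^sub>m m else 0\<^sub>m m m)"
    proof (cases "i \<le> j")
      case True
      show ?thesis
      proof (cases "i' \<le> j")
        case True thus ?thesis using on \<open>i \<le> j\<close> a unfolding ON_def by auto
      next
        case False hence "i' = j + 1" using a by simp
        thus ?thesis using perp[OF a(1) True] True by simp
      qed
    next
      case False hence ii: "i = j + 1" using a by simp
      show ?thesis
      proof (cases "i' \<le> j")
        case True
        have ci: "V i' \<in> carrier_mat n m" using a True j by (auto intro!: Vc)
        have "(V i)\<^sup>T * V i' = ((V i')\<^sup>T * V (j + 1))\<^sup>T" unfolding ii using ci cj by (simp add: transpose_mult')
        also have "\<dots> = 0\<^sub>m m m" using perp[OF a(3) True] by simp
        finally show ?thesis using True ii by simp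
      next
        case False hence "i' = j + 1" using a by simp
        thus ?thesis using ii VTV[of "j + 1"] j by simp
      qed
    qed
  qed
qed

definition D where "D = Delta Gam OmT"

primrec Z where
  "Z 0 = V 1"
| "Z (Suc k) = V (k + 2) - Z k * minv (D (k + 1)) * (Gam (k + 1))\<^sup>T"

lemma D_Suc: "D (Suc j) = (if j = 0 then OmT 1 else OmT (Suc j) - Gam j * minv (D j) * (Gam j)\<^sup>T)"
  unfolding D_def by simp

lemma Dc: "1 \<le> j \<Longrightarrow> j \<le> l \<Longrightarrow> D j \<in> carrier_mat m m"
proof (induct j)
  case 0 thus ?case by simp
next
  case (Suc j)
  show ?case
  proof (cases "j = 0")
    case True thus ?thesis using OmTc[of 1] Suc l1 by (simp add: D_Suc)
  next
    case False
    have c: "D j \<in> carrier_mat m m" "OmT (Suc j) \<in> carrier_mat m m" "Gam j \<in> carrier_mat m m"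
      using Suc False by (auto intro!: OmTc Gc)
    have c2: "minv (D j) \<in> carrier_mat m m" by (rule minv_carrier[OF c(1)])
    show ?thesis unfolding D_Suc using False c c2 by (intro carrier_matI) simp_all
  qed
qed

lemma Zc: "k < l \<Longrightarrow> Z k \<in> carrier_mat n m"
proof (induct k)
  case 0 thus ?case using Vc[of 1] l1 by simp
next
  case (Suc k)
  have c: "Z k \<in> carrier_mat n m" "V (k + 2) \<in> carrier_mat n m" "D (k + 1) \<in> carrier_mat m m"
    "Gam (k + 1) \<in> carrier_mat m m" using Suc by (auto intro!: Vc Gc Dc)
  have c2: "minv (D (k + 1)) \<in> carrier_mat m m" by (rule minv_carrier[OF c(3)])
  show ?case using c c2 by (intro carrier_matI) simp_all
qed

lemma Zspan: "k < l \<Longrightarrow> X \<in> carrier_mat n p \<Longrightarrow>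
  (\<forall>i. 1 \<le> i \<longrightarrow> i \<le> k + 1 \<longrightarrow> (V i)\<^sup>T * X = 0\<^sub>m m p) \<Longrightarrow> (Z k)\<^sup>T * X = 0\<^sub>m m p"
proof (induct k)
  case 0 thus ?case by simp
next
  case (Suc k)
  have c: "Z k \<in> carrier_mat n m" "V (k + 2) \<in> carrier_mat n m" "D (k + 1) \<in> carrier_mat m m"
    "Gam (k + 1) \<in> carrier_mat m m" using Suc by (auto intro!: Vc Gc Dc Zc)
  have c2: "minv (D (k + 1)) \<in> carrier_mat m m" by (rule minv_carrier[OF c(3)])
  have z: "(Z k)\<^sup>T * X = 0\<^sub>m m p" using Suc by auto
  have v: "(V (k + 2))\<^sup>T * X = 0\<^sub>m m p" using Suc(4) by auto
  have "(Z (Suc k))\<^sup>T * X = (V (k + 2))\<^sup>T * X - Gam (k + 1) * ((minv (D (k + 1)))\<^sup>T * ((Z k)\<^sup>T * X))"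
    using c c2 Suc(3) by (simp add: mdist massoc)
  also have "\<dots> = 0\<^sub>m m p" unfolding z v using c c2 by (intro eq_matI) auto
  finally show ?case .
qed

end

context LZ begin

lemma ZTV: "ON (k + 1) \<Longrightarrow> k < l \<Longrightarrow> (Z k)\<^sup>T * V (k + 1) = 1\<^sub>m m"
proof (induct k)
  case 0 thus ?case using VTV[of 1] l1 by simp
next
  case (Suc k)
  have c: "Z k \<in> carrier_mat n m" "V (k + 2) \<in> carrier_mat n m" "D (k + 1) \<in> carrier_mat m m"
    "Gam (k + 1) \<in> carrier_mat m m" using Suc by (auto intro!: Vc Gc Dc Zc)
  have c2: "minv (D (k + 1)) \<in> carrier_mat m m" by (rule minv_carrier[OF c(3)])
  have z: "(Z k)\<^sup>T * V (k + 2) = 0\<^sub>m m m"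
  proof (rule Zspan)
    show "k < l" "V (k + 2) \<in> carrier_mat n m" using Suc c by auto
    show "\<forall>i. 1 \<le> i \<longrightarrow> i \<le> k + 1 \<longrightarrow> (V i)\<^sup>T * V (k + 2) = 0\<^sub>m m m"
      using ON_D[OF Suc(2), of _ "k + 2"] by auto
  qed
  have v: "(V (k + 2))\<^sup>T * V (k + 2) = 1\<^sub>m m" using VTV[of "k + 2"] Suc by simp
  have "(Z (Suc k))\<^sup>T * V (Suc k + 1) = (V (k + 2))\<^sup>T * V (k + 2) - Gam (k + 1) * ((minv (D (k + 1)))\<^sup>T * ((Z k)\<^sup>T * V (k + 2)))"
    using c c2 by (simp add: mdist massoc)
  also have "\<dots> = 1\<^sub>m m" unfolding z v using c c2 by (intro eq_matI) auto
  finally show ?case .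
qed

lemma Dpd: assumes on: "ON (k + 1)" and k: "k < l"
  and az: "A * Z k = V (k + 1) * D (k + 1) + F (k + 1)"
  shows "(Z k)\<^sup>T * A * Z k = D (k + 1)" "pdm m (D (k + 1))"
proof -
  have c: "Z k \<in> carrier_mat n m" "V (k + 1) \<in> carrier_mat n m" "D (k + 1) \<in> carrier_mat m m"
    "F (k + 1) \<in> carrier_mat n m" using k by (auto intro!: Vc Dc Zc Fc)
  have zf: "(Z k)\<^sup>T * F (k + 1) = 0\<^sub>m m m"
  proof (rule Zspan[OF k c(4)])
    show "\<forall>i. 1 \<le> i \<longrightarrow> i \<le> k + 1 \<longrightarrow> (V i)\<^sup>T * F (k + 1) = 0\<^sub>m m m"
      using Fperp[OF on] k by auto
  qed
  have zv: "(Z k)\<^sup>T * V (k + 1) = 1\<^sub>m m" by (rule ZTV[OF on k])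
  have "(Z k)\<^sup>T * A * Z k = (Z k)\<^sup>T * (A * Z k)" using c A by (simp add: massoc)
  also have "\<dots> = (Z k)\<^sup>T * V (k + 1) * D (k + 1) + (Z k)\<^sup>T * F (k + 1)"
    unfolding az using c by (simp add: mdist massoc)
  also have "\<dots> = D (k + 1)" unfolding zv zf using c by (simp add: one_mult' add_zero_mat')
  finally show e: "(Z k)\<^sup>T * A * Z k = D (k + 1)" .
  show "pdm m (D (k + 1))" unfolding pdm_def
  proof (intro conjI ballI impI)
    show "D (k + 1) \<in> carrier_mat m m" by fact
    show "(D (k + 1))\<^sup>T = D (k + 1)" unfolding e[symmetric] using c A Asym
      by (simp add: transpose_mult' massoc)
    fix X :: "real mat" assume X: "X \<in> carrier_mat m 1" and nz: "X \<noteq> 0\<^sub>m m 1"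
    have ZX: "Z k * X \<in> carrier_mat n 1" using c X by simp
    have ZXnz: "Z k * X \<noteq> 0\<^sub>m n 1"
    proof
      assume h: "Z k * X = 0\<^sub>m n 1"
      have "X = ((Z k)\<^sup>T * V (k + 1))\<^sup>T * X" unfolding zv using X by (simp add: one_mult')
      also have "\<dots> = (V (k + 1))\<^sup>T * (Z k * X)" using c X by (simp add: transpose_mult' massoc)
      also have "\<dots> = 0\<^sub>m m 1" unfolding h using c by simp
      finally show False using nz by simp
    qed
    have "qf (D (k + 1)) X = qf A (Z k * X)"
      unfolding e[symmetric] qf_bil using bil_mult[OF c(1) X X A] by simp
    also have "\<dots> > 0" using Apd ZX ZXnz unfolding pdm_def by auto
    finally show "qf (D (k + 1)) X > 0" .
  qed
qed

lemma ZD: "ON (k + 1) \<Longrightarrow> k < l \<Longrightarrow>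
  (\<forall>j. 1 \<le> j \<longrightarrow> j \<le> k + 1 \<longrightarrow> pdm m (D j)) \<and> A * Z k = V (k + 1) * D (k + 1) + F (k + 1)"
proof (induct k)
  case 0
  have c: "V 1 \<in> carrier_mat n m" "Gam 0 \<in> carrier_mat m m" "OmT 1 \<in> carrier_mat m m"
    "F 1 \<in> carrier_mat n m" using l1 by (auto intro!: Vc Gc OmTc Fc)
  have az: "A * Z 0 = V (0 + 1) * D (0 + 1) + F (0 + 1)"
    using AV_F[of 1] l1 V0 c by (simp add: D_Suc zero_add_mat')
  have "pdm m (D (0 + 1))" by (rule Dpd(2)[OF 0(1) 0(2) az])
  thus ?case using az by (auto simp: le_Suc_eq)
next
  case (Suc k)
  have on1: "ON (k + 1)" using ON_mono[OF Suc(2)] by simp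
  have k: "k < l" "Suc k < l" using Suc by auto
  from Suc(1)[OF on1 k(1)] have pd: "\<forall>j. 1 \<le> j \<longrightarrow> j \<le> k + 1 \<longrightarrow> pdm m (D j)"
    and az: "A * Z k = V (k + 1) * D (k + 1) + F (k + 1)" by auto
  have dD: "det (D (k + 1)) \<noteq> 0" using pd pdm_det by auto
  have c: "Z k \<in> carrier_mat n m" "V (k + 1) \<in> carrier_mat n m" "V (k + 2) \<in> carrier_mat n m"
    "D (k + 1) \<in> carrier_mat m m" "Gam (k + 1) \<in> carrier_mat m m" "OmT (k + 2) \<in> carrier_mat m m"
    "F (k + 2) \<in> carrier_mat n m"
    using k by (auto intro!: Vc Gc Dc Zc OmTc Fc)
  have c2: "minv (D (k + 1)) \<in> carrier_mat m m" by (rule minv_carrier[OF c(4)])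
  have Fk: "F (k + 1) = V (k + 2) * Gam (k + 1)"
    using F_eq[OF Suc(2), of "k + 1"] k by simp
  have e1: "A * Z (Suc k) = A * V (k + 2) - A * (Z k * (minv (D (k + 1)) * (Gam (k + 1))\<^sup>T))"
    using c c2 A by (simp add: mdist massoc)
  have canc: "D (k + 1) * (minv (D (k + 1)) * (Gam (k + 1))\<^sup>T) = (Gam (k + 1))\<^sup>T"
    using minv_cancel(1)[OF c(4) dD] c by simp
  have e2: "A * (Z k * (minv (D (k + 1)) * (Gam (k + 1))\<^sup>T)) =
      V (k + 1) * (Gam (k + 1))\<^sup>T + V (k + 2) * (Gam (k + 1) * (minv (D (k + 1)) * (Gam (k + 1))\<^sup>T))"
  proof -
    have "A * (Z k * (minv (D (k + 1)) * (Gam (k + 1))\<^sup>T)) = (A * Z k) * (minv (D (k + 1)) * (Gam (k + 1))\<^sup>T)"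
      using c c2 A by (simp add: massoc)
    also have "\<dots> = V (k + 1) * (D (k + 1) * (minv (D (k + 1)) * (Gam (k + 1))\<^sup>T))
       + V (k + 2) * (Gam (k + 1) * (minv (D (k + 1)) * (Gam (k + 1))\<^sup>T))"
      unfolding az Fk using c c2 by (simp add: mdist massoc)
    finally show ?thesis unfolding canc .
  qed
  have e3: "A * V (k + 2) = V (k + 1) * (Gam (k + 1))\<^sup>T + V (k + 2) * OmT (k + 2) + F (k + 2)"
    using AV_F[of "k + 2"] k by simp
  have e4: "V (Suc k + 1) * D (Suc k + 1) = V (k + 2) * OmT (k + 2) - V (k + 2) * (Gam (k + 1) * (minv (D (k + 1)) * (Gam (k + 1))\<^sup>T))"
    using c c2 by (simp add: D_Suc mdist massoc)
  have az2: "A * Z (Suc k) = V (Suc k + 1) * D (Suc k + 1) + F (Suc k + 1)"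
    unfolding e1 e2 e3 e4 using c c2
    by (simp add: lin1[of _ n m])
  have pd2: "pdm m (D (Suc k + 1))" by (rule Dpd(2)[OF Suc(2) k(2) az2])
  show ?case using pd pd2 az2 by (auto simp: le_Suc_eq)
qed

end

lemma bcg_0: "bcgR A B X0 0 = B - A * X0" "bcgP A B X0 0 = B - A * X0"
  unfolding bcgR_def bcgP_def by simp_all

lemma bcg_Suc:
  "bcgR A B X0 (Suc k) = bcgR A B X0 k - A * bcgP A B X0 k * bcgUps A B X0 k"
  "bcgP A B X0 (Suc k) = bcgR A B X0 (Suc k) + bcgP A B X0 k *
     (minv ((bcgR A B X0 k)\<^sup>T * bcgR A B X0 k) * ((bcgR A B X0 (Suc k))\<^sup>T * bcgR A B X0 (Suc k)))"
proof -
  obtain X R P where b: "bcg A B X0 k = (X, R, P)" by (cases "bcg A B X0 k") auto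
  show "bcgR A B X0 (Suc k) = bcgR A B X0 k - A * bcgP A B X0 k * bcgUps A B X0 k"
    unfolding bcgR_def bcgP_def bcgUps_def using b by (simp add: Let_def)
  show "bcgP A B X0 (Suc k) = bcgR A B X0 (Suc k) + bcgP A B X0 k *
     (minv ((bcgR A B X0 k)\<^sup>T * bcgR A B X0 k) * ((bcgR A B X0 (Suc k))\<^sup>T * bcgR A B X0 (Suc k)))"
    unfolding bcgR_def bcgP_def bcgUps_def using b by (simp add: Let_def)
qed

lemma col_mcol: "col (mcol v) 0 = v"
  unfolding mcol_def by (intro eq_vecI) auto

lemma mult_mcol: "dim_col M = dim_vec v \<Longrightarrow> M * mcol v = mcol (M *\<^sub>v v)"
proof (intro eq_matI)
  fix i j assume "dim_col M = dim_vec v" "i < dim_row (mcol (M *\<^sub>v v))" "j < dim_col (mcol (M *\<^sub>v v))"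
  thus "(M * mcol v) $$ (i, j) = mcol (M *\<^sub>v v) $$ (i, j)"
    using col_mcol[of v] unfolding mcol_def by auto
qed (auto simp: mcol_def)

lemma mcol_inj: "mcol v = mcol w \<Longrightarrow> v = w"
proof -
  assume h: "mcol v = mcol w"
  hence d: "dim_vec v = dim_vec w" unfolding mcol_def by (metis dim_row_mat(1))
  show "v = w"
  proof (rule eq_vecI)
    fix i assume "i < dim_vec w"
    hence "mcol v $$ (i,0) = v $ i" "mcol w $$ (i,0) = w $ i" using d unfolding mcol_def by auto
    thus "v $ i = w $ i" using h by simp
  qed (use d in auto)
qed

lemma fcr_det: assumes R: "R \<in> carrier_mat p q" and f: "full_col_rank R"
  shows "det (R\<^sup>T * R) \<noteq> 0"
proof
  assume d: "det (R\<^sup>T * R) = 0"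
  have c: "R\<^sup>T * R \<in> carrier_mat q q" using R by simp
  obtain v where v: "v \<in> carrier_vec q" "v \<noteq> 0\<^sub>v q" "(R\<^sup>T * R) *\<^sub>v v = 0\<^sub>v q"
    using d det_0_iff_vec_prod_zero[OF c] by auto
  define X where "X = mcol v"
  have X: "X \<in> carrier_mat q 1" unfolding X_def by (rule mcol_carrier[OF v(1)])
  have "nrm (R * X) = qf (R\<^sup>T * R) X" unfolding nrm_def qf_def using R X
    by (simp add: transpose_mult' massoc)
  also have "\<dots> = 0"
  proof -
    have "(R\<^sup>T * R) * X = mcol ((R\<^sup>T * R) *\<^sub>v v)" unfolding X_def
      by (rule mult_mcol) (use v R in simp)
    also have "\<dots> = 0\<^sub>m q 1" unfolding v(3) by (intro eq_matI) (auto simp: mcol_def)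
    finally have e: "(R\<^sup>T * R) * X = 0\<^sub>m q 1" .
    have "qf (R\<^sup>T * R) X = (X\<^sup>T * ((R\<^sup>T * R) * X)) $$ (0,0)" unfolding qf_def
      using R X by (simp add: massoc)
    also have "\<dots> = 0" unfolding e using X by simp
    finally show ?thesis .
  qed
  finally have n0: "nrm (R * X) = 0" .
  have RX: "R * X = 0\<^sub>m p 1"
  proof (rule ccontr)
    assume "R * X \<noteq> 0\<^sub>m p 1"
    hence "nrm (R * X) > 0" using R X by (intro nrm_pos) auto
    thus False using n0 by simp
  qed
  have e1: "mcol (R *\<^sub>v v) = 0\<^sub>m p 1" using RX mult_mcol[of R v] R v unfolding X_def by simp
  have e2: "mcol (0\<^sub>v p) = 0\<^sub>m p 1" by (intro eq_matI) (auto simp: mcol_def)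
  have "mcol (R *\<^sub>v v) = mcol (0\<^sub>v p)" unfolding e1 e2 ..
  hence "R *\<^sub>v v = 0\<^sub>v p" by (rule mcol_inj)
  hence "v = 0\<^sub>v q" using f v R unfolding full_col_rank_def by auto
  thus False using v by simp
qed

lemma det_TT: assumes G: "G \<in> carrier_mat q q" and d: "det (G\<^sup>T * G) \<noteq> 0" shows "det (G::real mat) \<noteq> 0"
  using d det_mult[of "G\<^sup>T" q G] det_transpose[OF G] G by auto

lemma lin2: assumes "a \<in> carrier_mat p q" "b \<in> carrier_mat p q"
  shows "a - (a + b) = (-1) \<cdot>\<^sub>m (b::real mat)" "a + (-1) \<cdot>\<^sub>m b = a - b"
  using assms by (auto intro!: eq_matI)

locale LZB = LZ n m l A "B - A * X0" V Gam Om for n m l and A B X0 :: "real mat" and V Gam Om +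
  assumes B: "B \<in> carrier_mat n m" and X0: "X0 \<in> carrier_mat n m"
    and Rrank: "\<forall>k<l. full_col_rank (bcgR A B X0 k)"
begin

primrec Psi where
  "Psi 0 = Gam 0"
| "Psi (Suc k) = (-1) \<cdot>\<^sub>m (Gam (Suc k) * minv (D (Suc k)) * Psi k)"

lemma link: "k < l \<Longrightarrow> ON (k + 1) \<and> (\<forall>i\<le>k. det (Gam i) \<noteq> 0) \<and>
  bcgR A B X0 k = V (k + 1) * Psi k \<and> bcgP A B X0 k = Z k * Psi k \<and>
  Psi k \<in> carrier_mat m m \<and> det (Psi k) \<noteq> 0"
proof (induct k)
  case 0
  have on: "ON 1" unfolding ON_def using VTV[of 1] l1 by auto
  have c: "V 1 \<in> carrier_mat n m" "Gam 0 \<in> carrier_mat m m" using l1 by (auto intro!: Vc Gc)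
  have R: "bcgR A B X0 0 = V 1 * Gam 0" "bcgP A B X0 0 = V 1 * Gam 0" using bcg_0 R0_QR by auto
  have "det ((bcgR A B X0 0)\<^sup>T * bcgR A B X0 0) \<noteq> 0"
    by (rule fcr_det[of _ n m]) (use Rrank l1 c R in auto)
  moreover have "(bcgR A B X0 0)\<^sup>T * bcgR A B X0 0 = (Gam 0)\<^sup>T * Gam 0"
    unfolding R using massoc_subst[OF _ _ VTV[of 1]] c l1 by (simp add: transpose_mult' massoc one_mult')
  ultimately have "det (Gam 0) \<noteq> 0" using det_TT[OF c(2)] by simp
  thus ?case using on R c by simp
next
  case (Suc k)
  have k: "k < l" "Suc k < l" using Suc by auto
  from Suc(1)[OF k(1)] have on: "ON (k + 1)" and dG: "\<forall>i\<le>k. det (Gam i) \<noteq> 0"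
    and Rk: "bcgR A B X0 k = V (k + 1) * Psi k" and Pk: "bcgP A B X0 k = Z k * Psi k"
    and cPs: "Psi k \<in> carrier_mat m m" and dPs: "det (Psi k) \<noteq> 0" by auto
  from ZD[OF on k(1)] have pd: "\<forall>j. 1 \<le> j \<longrightarrow> j \<le> k + 1 \<longrightarrow> pdm m (D j)"
    and az: "A * Z k = V (k + 1) * D (k + 1) + F (k + 1)" by auto
  have ZAZ: "(Z k)\<^sup>T * A * Z k = D (k + 1)" by (rule Dpd(1)[OF on k(1) az])
  have pdD: "pdm m (D (k + 1))" using pd by auto
  have dD: "det (D (k + 1)) \<noteq> 0" using pdD pdm_det by auto
  have Dsym: "(D (k + 1))\<^sup>T = D (k + 1)" using pdD pdm_sym by auto
  have Fk: "F (k + 1) = V (k + 2) * Gam (k + 1)"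
    using F_eq[OF on, of "k + 1"] k by simp
  define G where "G = Gam (k + 1)"
  define Dk where "Dk = D (k + 1)"
  define Mi where "Mi = minv Dk"
  define Ps where "Ps = Psi k"
  define Pi where "Pi = minv Ps"
  define Ps' where "Ps' = (-1) \<cdot>\<^sub>m (G * (Mi * Ps))"
  have c: "Z k \<in> carrier_mat n m" "V (k + 1) \<in> carrier_mat n m" "V (k + 2) \<in> carrier_mat n m"
    "Dk \<in> carrier_mat m m" "G \<in> carrier_mat m m" "Ps \<in> carrier_mat m m"
    using k cPs unfolding G_def Dk_def Ps_def by (auto intro!: Vc Gc Dc Zc)
  note MI = minv_inv[OF c(4) dD[folded Dk_def], folded Mi_def]
  note PI = minv_inv[OF c(6) dPs[folded Ps_def], folded Pi_def]
  have cMi: "Mi \<in> carrier_mat m m" using MI by simp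
  have cPi: "Pi \<in> carrier_mat m m" using PI by simp
  have cPs': "Ps' \<in> carrier_mat m m" unfolding Ps'_def using c cMi by simp
  have Ps'_eq: "Psi (Suc k) = Ps'" unfolding Ps'_def G_def Mi_def Dk_def Ps_def using c cMi
    unfolding G_def Dk_def Mi_def Ps_def by (simp add: massoc)
  have MiSym: "Mi\<^sup>T = Mi" unfolding Mi_def by (rule minv_sym[OF c(4) dD[folded Dk_def] Dsym[folded Dk_def]])
  have PiT: "minv (Ps\<^sup>T) = Pi\<^sup>T" unfolding Pi_def by (rule minv_transpose[OF c(6) dPs[folded Ps_def]])
  have dPsT: "det (Ps\<^sup>T) \<noteq> 0" using det_transpose[OF c(6)] dPs unfolding Ps_def by simp
  have dDPs: "det (Dk * Ps) \<noteq> 0" using det_mult_nz[OF c(4) c(6)] dD dPs unfolding Dk_def Ps_def by simp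
  have cancelPs: "Ps * (Pi * X) = X" "Pi\<^sup>T * (Ps\<^sup>T * X) = X" if "dim_row X = m" for X
  proof -
    show "Ps * (Pi * X) = X" using minv_cancel(1)[OF c(6) dPs[folded Ps_def]] that unfolding Pi_def by simp
    have "Ps\<^sup>T * Pi\<^sup>T = 1\<^sub>m m" using transpose_mult'[of Pi Ps] PI c(6) cPi by simp
    hence "Pi\<^sup>T * Ps\<^sup>T = 1\<^sub>m m" using mat_mult_left_right_inverse[of "Ps\<^sup>T" m "Pi\<^sup>T"] c(6) cPi by simp
    thus "Pi\<^sup>T * (Ps\<^sup>T * X) = X" using that c(6) cPi by (intro cancel_r[of _ _ m]) auto
  qed
  have cancelD: "Dk * (Mi * X) = X" if "dim_row X = m" for X
    using minv_cancel(1)[OF c(4) dD[folded Dk_def]] that unfolding Mi_def by simp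
  have RtR: "(bcgR A B X0 k)\<^sup>T * bcgR A B X0 k = Ps\<^sup>T * Ps"
    unfolding Rk Ps_def[symmetric] using massoc_subst[OF _ _ VTV[of "k + 1"]] c k
    by (simp add: transpose_mult' massoc one_mult')
  have PAP: "(bcgP A B X0 k)\<^sup>T * A * bcgP A B X0 k = Ps\<^sup>T * (Dk * Ps)"
  proof -
    have "(Z k)\<^sup>T * (A * (Z k * Ps)) = ((Z k)\<^sup>T * A * Z k) * Ps" using c A by (simp add: massoc)
    thus ?thesis unfolding Pk Ps_def[symmetric] ZAZ Dk_def[symmetric] using c A
      by (simp add: transpose_mult' massoc)
  qed
  have minvPAP: "minv ((bcgP A B X0 k)\<^sup>T * A * bcgP A B X0 k) = Pi * (Mi * Pi\<^sup>T)"
    unfolding PAP using minv_mult[of "Ps\<^sup>T" m "Dk * Ps"] minv_mult[OF c(4) c(6) dD[folded Dk_def] dPs[folded Ps_def]]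
      dPsT dDPs c PiT cPi cMi unfolding Mi_def[symmetric] Pi_def[symmetric] by (simp add: massoc)
  have Ups: "bcgUps A B X0 k = Pi * (Mi * Ps)"
    unfolding bcgUps_def minvPAP RtR using cancelPs(2)[of Ps] c cPi cMi by (simp add: massoc)
  have APU: "A * bcgP A B X0 k * bcgUps A B X0 k = V (k + 1) * Ps + V (k + 2) * (G * (Mi * Ps))"
  proof -
    have "A * bcgP A B X0 k * bcgUps A B X0 k = A * (Z k * (Ps * (Pi * (Mi * Ps))))"
      unfolding Ups Pk Ps_def[symmetric] using c cPi cMi A by (simp add: massoc)
    also have "\<dots> = (A * Z k) * (Mi * Ps)" using cancelPs(1)[of "Mi * Ps"] c cMi A by (simp add: massoc)
    also have "\<dots> = V (k + 1) * (Dk * (Mi * Ps)) + V (k + 2) * (G * (Mi * Ps))"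
      unfolding az Fk Dk_def[symmetric] G_def[symmetric] using c cMi by (simp add: mdist massoc)
    also have "\<dots> = V (k + 1) * Ps + V (k + 2) * (G * (Mi * Ps))"
      using cancelD[of Ps] c by simp
    finally show ?thesis .
  qed
  have Rk1: "bcgR A B X0 (Suc k) = V (Suc k + 1) * Ps'"
  proof -
    have "bcgR A B X0 (Suc k) = V (k + 1) * Ps - (V (k + 1) * Ps + V (k + 2) * (G * (Mi * Ps)))"
      unfolding bcg_Suc(1) APU Rk Ps_def ..
    also have "\<dots> = (-1) \<cdot>\<^sub>m (V (k + 2) * (G * (Mi * Ps)))"
      using c cMi by (intro lin2(1)[of _ n m]) auto
    also have "\<dots> = V (Suc k + 1) * Ps'" unfolding Ps'_def using c cMi by (simp add: mult_smult_r)
    finally show ?thesis .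
  qed
  have VTV2: "(V (k + 2))\<^sup>T * V (k + 2) = 1\<^sub>m m" using VTV[of "k + 2"] k by simp
  have RtR1: "(bcgR A B X0 (Suc k))\<^sup>T * bcgR A B X0 (Suc k) = Ps'\<^sup>T * Ps'"
    unfolding Rk1 using massoc_subst[OF _ _ VTV2] c cPs' by (simp add: transpose_mult' massoc one_mult')
  have dPs': "det Ps' \<noteq> 0"
  proof -
    have "det ((bcgR A B X0 (Suc k))\<^sup>T * bcgR A B X0 (Suc k)) \<noteq> 0"
      by (rule fcr_det[of _ n m]) (use Rrank k Rk1 c cPs' in auto)
    thus ?thesis unfolding RtR1 using det_TT[OF cPs'] by simp
  qed
  have dG1: "det G \<noteq> 0"
  proof
    assume "det G = 0"
    hence "det (G * (Mi * Ps)) = 0" using det_mult[of G m "Mi * Ps"] c cMi by simp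
    hence "det Ps' = 0" unfolding Ps'_def using c cMi by simp
    thus False using dPs' by simp
  qed
  have on2: "ON (Suc k + 1)" using Vnext_perp[of "k + 1"] on k dG1 unfolding G_def by simp
  have Ps'T: "Ps'\<^sup>T = (-1) \<cdot>\<^sub>m (Ps\<^sup>T * (Mi * G\<^sup>T))" unfolding Ps'_def using c cMi MiSym
    by (simp add: transpose_mult' transpose_smult' massoc)
  have Xi: "minv ((bcgR A B X0 k)\<^sup>T * bcgR A B X0 k) * ((bcgR A B X0 (Suc k))\<^sup>T * bcgR A B X0 (Suc k))
      = (-1) \<cdot>\<^sub>m (Pi * (Mi * (G\<^sup>T * Ps')))"
  proof -
    have "minv ((bcgR A B X0 k)\<^sup>T * bcgR A B X0 k) = Pi * Pi\<^sup>T"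
      unfolding RtR using minv_mult[OF _ c(6) dPsT dPs[folded Ps_def]] c PiT unfolding Pi_def[symmetric] by simp
    hence "minv ((bcgR A B X0 k)\<^sup>T * bcgR A B X0 k) * ((bcgR A B X0 (Suc k))\<^sup>T * bcgR A B X0 (Suc k))
       = Pi * (Pi\<^sup>T * (Ps\<^sup>T * ((-1) \<cdot>\<^sub>m (Mi * (G\<^sup>T * Ps')))))"
      unfolding RtR1 Ps'T using c cPi cMi cPs' by (simp add: massoc mult_smult_r smult_mult_l)
    also have "\<dots> = (-1) \<cdot>\<^sub>m (Pi * (Mi * (G\<^sup>T * Ps')))"
      using cancelPs(2)[of "(-1) \<cdot>\<^sub>m (Mi * (G\<^sup>T * Ps'))"] c cPi cMi cPs' by (simp add: mult_smult_r)
    finally show ?thesis .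
  qed
  have Pk1: "bcgP A B X0 (Suc k) = Z (Suc k) * Ps'"
  proof -
    have "bcgP A B X0 (Suc k) = bcgR A B X0 (Suc k) + bcgP A B X0 k * ((-1) \<cdot>\<^sub>m (Pi * (Mi * (G\<^sup>T * Ps'))))"
      by (simp only: bcg_Suc(2) Xi)
    also have "\<dots> = V (k + 2) * Ps' + Z k * (Ps * ((-1) \<cdot>\<^sub>m (Pi * (Mi * (G\<^sup>T * Ps')))))"
      unfolding Rk1 Pk Ps_def[symmetric] using c cPi cMi cPs' by (simp add: massoc)
    also have "\<dots> = V (k + 2) * Ps' + (-1) \<cdot>\<^sub>m (Z k * (Mi * (G\<^sup>T * Ps')))"
      using cancelPs(1)[of "Mi * (G\<^sup>T * Ps')"] c cPi cMi cPs' by (simp add: mult_smult_r)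
    also have "\<dots> = V (k + 2) * Ps' - Z k * (Mi * (G\<^sup>T * Ps'))"
      using c cMi cPs' by (intro lin2(2)[of _ n m]) auto
    also have "\<dots> = Z (Suc k) * Ps'"
    proof -
      have Zs: "Z (Suc k) = V (k + 2) - Z k * Mi * G\<^sup>T" unfolding Mi_def Dk_def G_def by simp
      show ?thesis unfolding Zs using c cMi cPs' by (simp add: mdist massoc)
    qed
    finally show ?thesis .
  qed
  have dGall: "\<forall>i\<le>Suc k. det (Gam i) \<noteq> 0" using dG dG1 unfolding G_def by (auto simp: le_Suc_eq)
  show ?case using on2 dGall Rk1 Pk1 Ps'_eq cPs' dPs' by simp
qed

end

definition catm :: "nat \<Rightarrow> nat \<Rightarrow> (nat \<Rightarrow> real mat) \<Rightarrow> nat \<Rightarrow> real mat" where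
  "catm n m W k = mat n (k * m) (\<lambda>(r, c). W (c div m + 1) $$ (r, c mod m))"

definition Ecat :: "nat \<Rightarrow> nat \<Rightarrow> nat \<Rightarrow> real mat" where
  "Ecat m k j = mat (k * m) m (\<lambda>(i, c). if i div m + 1 = j \<and> i mod m = c then 1 else 0)"

lemma catm_carrier[simp]: "catm n m W k \<in> carrier_mat n (k * m)" unfolding catm_def by simp
lemma Ecat_carrier[simp]: "Ecat m k j \<in> carrier_mat (k * m) m" unfolding Ecat_def by simp

lemma catm_dim[simp]: "dim_row (catm n m W k) = n" "dim_col (catm n m W k) = k * m"
  unfolding catm_def by simp_all
lemma Ecat_dim[simp]: "dim_row (Ecat m k j) = k * m" "dim_col (Ecat m k j) = m"
  unfolding Ecat_def by simp_all

lemma idx_bounds: assumes "i < k * (m::nat)" shows "i div m < k" "i mod m < m" "m > 0"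
proof -
  show "m > 0" using assms by (cases "m = 0") auto
  thus "i mod m < m" by simp
  show "i div m < k" using assms by (simp add: less_mult_imp_div_less)
qed

lemma catmT_mult:
  assumes W: "\<And>b. 1 \<le> b \<Longrightarrow> b \<le> k \<Longrightarrow> W b \<in> carrier_mat n m"
    and X: "X \<in> carrier_mat n p" and i: "i < k * m" and c: "c < p"
  shows "((catm n m W k)\<^sup>T * X) $$ (i, c) = ((W (i div m + 1))\<^sup>T * X) $$ (i mod m, c)"
proof -
  note b = idx_bounds[OF i]
  have Wc: "W (i div m + 1) \<in> carrier_mat n m" using W b by simp
  show ?thesis using X i c b Wc unfolding catm_def
    by (simp add: scalar_prod_def row_def col_def)
qed

lemma mult_catm:
  assumes W: "\<And>b. 1 \<le> b \<Longrightarrow> b \<le> k \<Longrightarrow> W b \<in> carrier_mat n m"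
    and Y: "Y \<in> carrier_mat p n" and j: "j < k * m" and c: "c < p"
  shows "(Y * catm n m W k) $$ (c, j) = (Y * W (j div m + 1)) $$ (c, j mod m)"
proof -
  note b = idx_bounds[OF j]
  have Wc: "W (j div m + 1) \<in> carrier_mat n m" using W b by simp
  show ?thesis using Y j c b Wc unfolding catm_def
    by (simp add: scalar_prod_def row_def col_def)
qed

lemma sum_single:
  assumes "t0 < (N::nat)"
  shows "(\<Sum>t = 0..<N. f t * (if t = t0 then 1 else 0)) = (f t0 :: real)"
proof -
  have "(\<Sum>t = 0..<N. f t * (if t = t0 then 1 else 0)) = (\<Sum>t = 0..<N. if t = t0 then f t else 0)"
    by (rule sum.cong) auto
  also have "\<dots> = f t0" using assms by (simp add: sum.delta)
  finally show ?thesis .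
qed

lemma Ecat_eq: assumes c: "c < m" and t: "t < k * m"
  shows "Ecat m k j $$ (t, c) = (if t = (j - 1) * m + c \<and> 1 \<le> j then 1 else 0)"
proof -
  note b = idx_bounds[OF t]
  have "(t div m + 1 = j \<and> t mod m = c) \<longleftrightarrow> (t = (j - 1) * m + c \<and> 1 \<le> j)"
  proof
    assume h: "t div m + 1 = j \<and> t mod m = c"
    hence "j - 1 = t div m" "t mod m = c" by auto
    hence "t = (j - 1) * m + c" using div_mult_mod_eq[of t m] by simp
    thus "t = (j - 1) * m + c \<and> 1 \<le> j" using h by simp
  next
    assume h: "t = (j - 1) * m + c \<and> 1 \<le> j"
    thus "t div m + 1 = j \<and> t mod m = c" using c by simp
  qed
  thus ?thesis unfolding Ecat_def using c t by simp
qed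

lemma catm_Ecat:
  assumes W: "\<And>b. 1 \<le> b \<Longrightarrow> b \<le> k \<Longrightarrow> W b \<in> carrier_mat n m"
    and j: "1 \<le> j" "j \<le> k"
  shows "catm n m W k * Ecat m k j = W j"
proof (rule eq_matI)
  have Wj: "W j \<in> carrier_mat n m" using W j by simp
  show "dim_row (catm n m W k * Ecat m k j) = dim_row (W j)" "dim_col (catm n m W k * Ecat m k j) = dim_col (W j)"
    using Wj by auto
  fix r c assume "r < dim_row (W j)" "c < dim_col (W j)"
  hence r: "r < n" and c: "c < m" using Wj by auto
  define t0 where "t0 = (j - 1) * m + c"
  have t0: "t0 < k * m"
  proof -
    have "t0 < (j - 1) * m + m" unfolding t0_def using c by simp
    also have "\<dots> = j * m" using j by (cases j) auto
    also have "\<dots> \<le> k * m" using j by simp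
    finally show ?thesis .
  qed
  have t0d: "t0 div m = j - 1" "t0 mod m = c" unfolding t0_def using c by auto
  have "(catm n m W k * Ecat m k j) $$ (r, c) = (\<Sum>t = 0..<k * m. catm n m W k $$ (r, t) * Ecat m k j $$ (t, c))"
    using r c by (simp add: scalar_prod_def row_def col_def)
  also have "\<dots> = (\<Sum>t = 0..<k * m. catm n m W k $$ (r, t) * (if t = t0 then 1 else 0))"
    by (rule sum.cong) (use Ecat_eq[OF c] j in \<open>auto simp: t0_def\<close>)
  also have "\<dots> = catm n m W k $$ (r, t0)" by (rule sum_single[OF t0])
  also have "\<dots> = W j $$ (r, c)" unfolding catm_def using r t0 t0d j by simp
  finally show "(catm n m W k * Ecat m k j) $$ (r, c) = W j $$ (r, c)" .
qed

context LZ begin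

lemma VV: assumes on: "ON j" and jl: "j \<le> l" and a: "a \<le> j" and b: "b \<le> j"
  shows "(V a)\<^sup>T * V b = (if a = b \<and> 1 \<le> a then 1\<^sub>m m else 0\<^sub>m m m)"
proof -
  have ca: "V a \<in> carrier_mat n m" "V b \<in> carrier_mat n m" using a b jl by (auto intro!: Vc)
  show ?thesis
  proof (cases "a = 0 \<or> b = 0")
    case True thus ?thesis using V0 ca by auto
  next
    case False thus ?thesis using on a b unfolding ON_def by auto
  qed
qed

lemma blockA: assumes on: "ON (k + 1)" and k: "k < l" and i: "1 \<le> i" "i \<le> k + 1" and j: "1 \<le> j" "j \<le> k"
  shows "(V i)\<^sup>T * (A * V j) = (if i = j then OmT j else if i = j + 1 then Gam j
     else if j = i + 1 then (Gam i)\<^sup>T else 0\<^sub>m m m)"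
proof -
  have c: "V i \<in> carrier_mat n m" "V (j - 1) \<in> carrier_mat n m" "V j \<in> carrier_mat n m"
    "V (j + 1) \<in> carrier_mat n m" "Gam (j - 1) \<in> carrier_mat m m" "Gam j \<in> carrier_mat m m"
    "OmT j \<in> carrier_mat m m" "Gam i \<in> carrier_mat m m" if "i \<le> k" using i j k that by (auto intro!: Vc Gc OmTc)
  have c': "V i \<in> carrier_mat n m" "V (j - 1) \<in> carrier_mat n m" "V j \<in> carrier_mat n m"
    "V (j + 1) \<in> carrier_mat n m" "Gam (j - 1) \<in> carrier_mat m m" "Gam j \<in> carrier_mat m m"
    "OmT j \<in> carrier_mat m m" using i j k by (auto intro!: Vc Gc OmTc)
  have Fj: "F j = V (j + 1) * Gam j" by (rule F_eq[OF on j(1)]) (use j k in auto)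
  have AVj: "A * V j = V (j - 1) * (Gam (j - 1))\<^sup>T + V j * OmT j + V (j + 1) * Gam j"
    using AV_F[of j] j k Fj by simp
  have e: "(V i)\<^sup>T * (A * V j) = ((V i)\<^sup>T * V (j - 1)) * (Gam (j - 1))\<^sup>T + ((V i)\<^sup>T * V j) * OmT j
      + ((V i)\<^sup>T * V (j + 1)) * Gam j"
    unfolding AVj using c' by (simp add: mdist massoc)
  have v1: "(V i)\<^sup>T * V (j - 1) = (if i = j - 1 \<and> 1 \<le> i then 1\<^sub>m m else 0\<^sub>m m m)"
    by (rule VV[OF on]) (use i j k in auto)
  have v2: "(V i)\<^sup>T * V j = (if i = j \<and> 1 \<le> i then 1\<^sub>m m else 0\<^sub>m m m)"
    by (rule VV[OF on]) (use i j k in auto)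
  have v3: "(V i)\<^sup>T * V (j + 1) = (if i = j + 1 \<and> 1 \<le> i then 1\<^sub>m m else 0\<^sub>m m m)"
    by (rule VV[OF on]) (use i j k in auto)
  have z: "0\<^sub>m m m + 0\<^sub>m m m + 0\<^sub>m m m = (0\<^sub>m m m :: real mat)" by auto
  show ?thesis unfolding e v1 v2 v3 using c' i j
    by (auto simp: add_zero_mat' zero_add_mat' one_mult' intro!: eq_matI)
qed

lemma Vcar: "\<And>b. 1 \<le> b \<Longrightarrow> b \<le> k \<Longrightarrow> k \<le> l \<Longrightarrow> V b \<in> carrier_mat n m"
  by (rule Vc) simp

lemma divmod_eq: "a div m = b div m \<Longrightarrow> a mod m = b mod (m::nat) \<Longrightarrow> a = b"
  by (metis div_mult_mod_eq)

lemma VcTVc: assumes on: "ON k" and kl: "k \<le> l"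
  shows "(catm n m V k)\<^sup>T * catm n m V k = 1\<^sub>m (k * m)"
proof (rule eq_matI)
  fix a b assume "a < dim_row (1\<^sub>m (k * m))" "b < dim_col (1\<^sub>m (k * m))"
  hence a: "a < k * m" and b: "b < k * m" by auto
  note ia = idx_bounds[OF a] and ib = idx_bounds[OF b]
  have W: "\<And>b. 1 \<le> b \<Longrightarrow> b \<le> k \<Longrightarrow> V b \<in> carrier_mat n m" using kl by (auto intro!: Vc)
  have cva: "V (a div m + 1) \<in> carrier_mat n m" using W ia by simp
  have "((catm n m V k)\<^sup>T * catm n m V k) $$ (a, b) = ((V (a div m + 1))\<^sup>T * catm n m V k) $$ (a mod m, b)"
    by (rule catmT_mult[OF W _ a b]) auto
  also have "\<dots> = ((V (a div m + 1))\<^sup>T * V (b div m + 1)) $$ (a mod m, b mod m)"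
    by (rule mult_catm[OF W _ b ia(2)]) (use cva in auto)
  also have "\<dots> = (if a div m + 1 = b div m + 1 \<and> 1 \<le> a div m + 1 then 1\<^sub>m m else 0\<^sub>m m m) $$ (a mod m, b mod m)"
    by (subst VV[OF on kl]) (use ia ib in auto)
  also have "\<dots> = 1\<^sub>m (k * m) $$ (a, b)" using ia ib a b divmod_eq[of a b] by auto
  finally show "((catm n m V k)\<^sup>T * catm n m V k) $$ (a, b) = 1\<^sub>m (k * m) $$ (a, b)" .
qed auto

lemma VcTX: assumes kl: "k \<le> l" and X: "X \<in> carrier_mat n p"
  and M: "\<And>b. 1 \<le> b \<Longrightarrow> b \<le> k \<Longrightarrow> (V b)\<^sup>T * X = M b"
  and a: "a < k * m" and c: "c < p"
  shows "((catm n m V k)\<^sup>T * X) $$ (a, c) = M (a div m + 1) $$ (a mod m, c)"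
proof -
  note ia = idx_bounds[OF a]
  have W: "\<And>b. 1 \<le> b \<Longrightarrow> b \<le> k \<Longrightarrow> V b \<in> carrier_mat n m" using kl by (auto intro!: Vc)
  have "((catm n m V k)\<^sup>T * X) $$ (a, c) = ((V (a div m + 1))\<^sup>T * X) $$ (a mod m, c)"
    by (rule catmT_mult[OF W X a c]) auto
  thus ?thesis using M ia by simp
qed

lemma VcTVj: assumes on: "ON k" and kl: "k \<le> l" and j: "1 \<le> j" "j \<le> k"
  shows "(catm n m V k)\<^sup>T * V j = Ecat m k j"
proof (rule eq_matI)
  fix a c assume "a < dim_row (Ecat m k j)" "c < dim_col (Ecat m k j)"
  hence a: "a < k * m" and c: "c < m" by auto
  note ia = idx_bounds[OF a]
  have Vj: "V j \<in> carrier_mat n m" using j kl by (auto intro!: Vc)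
  have "((catm n m V k)\<^sup>T * V j) $$ (a, c) = (\<lambda>b. if b = j \<and> 1 \<le> b then 1\<^sub>m m else 0\<^sub>m m m) (a div m + 1) $$ (a mod m, c)"
    by (rule VcTX[OF kl Vj _ a c], rule VV[OF on kl]) (use j in auto)
  also have "\<dots> = Ecat m k j $$ (a, c)"
    unfolding Ecat_def using a c ia by auto
  finally show "((catm n m V k)\<^sup>T * V j) $$ (a, c) = Ecat m k j $$ (a, c)" .
qed (use Vc[of j] j kl in auto)

lemma VcTVk1: assumes on: "ON (k + 1)" and kl: "k < l"
  shows "(catm n m V k)\<^sup>T * V (k + 1) = 0\<^sub>m (k * m) m"
proof (rule eq_matI)
  fix a c assume "a < dim_row (0\<^sub>m (k * m) m :: real mat)" "c < dim_col (0\<^sub>m (k * m) m :: real mat)"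
  hence a: "a < k * m" and c: "c < m" by auto
  note ia = idx_bounds[OF a]
  have V1: "V (k + 1) \<in> carrier_mat n m" using kl by (auto intro!: Vc)
  have "((catm n m V k)\<^sup>T * V (k + 1)) $$ (a, c) = (0\<^sub>m m m :: real mat) $$ (a mod m, c)"
  proof (rule VcTX[OF _ V1 _ a c])
    fix b assume "1 \<le> b" "b \<le> k"
    thus "(V b)\<^sup>T * V (k + 1) = 0\<^sub>m m m" using VV[OF on, of b "k + 1"] kl by auto
  qed (use kl in auto)
  thus "((catm n m V k)\<^sup>T * V (k + 1)) $$ (a, c) = (0\<^sub>m (k * m) m :: real mat) $$ (a, c)" using ia a c by simp
qed (use Vc[of "k + 1"] kl in auto)

end

context LZ begin

lemma VcTAVc: assumes on: "ON (k + 1)" and kl: "k < l"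
  shows "(catm n m V k)\<^sup>T * A * catm n m V k = Tmat m Gam Om k"
proof (rule eq_matI)
  fix a b assume "a < dim_row (Tmat m Gam Om k)" "b < dim_col (Tmat m Gam Om k)"
  hence a: "a < k * m" and b: "b < k * m" unfolding Tmat_def by auto
  note ia = idx_bounds[OF a] and ib = idx_bounds[OF b]
  have W: "\<And>b. 1 \<le> b \<Longrightarrow> b \<le> k \<Longrightarrow> V b \<in> carrier_mat n m" using kl by (auto intro!: Vc)
  have cva: "V (a div m + 1) \<in> carrier_mat n m" using W ia by simp
  have "((catm n m V k)\<^sup>T * A * catm n m V k) $$ (a, b) = ((catm n m V k)\<^sup>T * (A * catm n m V k)) $$ (a, b)"
    using A by (simp add: massoc)
  also have "\<dots> = ((V (a div m + 1))\<^sup>T * (A * catm n m V k)) $$ (a mod m, b)"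
    by (rule catmT_mult[OF W _ a b]) (use A in auto)
  also have "\<dots> = (((V (a div m + 1))\<^sup>T * A) * catm n m V k) $$ (a mod m, b)"
    using A cva by (simp add: massoc)
  also have "\<dots> = (((V (a div m + 1))\<^sup>T * A) * V (b div m + 1)) $$ (a mod m, b mod m)"
    by (rule mult_catm[OF W _ b ia(2)]) (use cva A in auto)
  also have "\<dots> = ((V (a div m + 1))\<^sup>T * (A * V (b div m + 1))) $$ (a mod m, b mod m)"
    using A cva W[of "b div m + 1"] ib by (simp add: massoc)
  also have "\<dots> = (if a div m + 1 = b div m + 1 then OmT (b div m + 1) else if a div m + 1 = b div m + 1 + 1 then Gam (b div m + 1)
     else if b div m + 1 = a div m + 1 + 1 then (Gam (a div m + 1))\<^sup>T else 0\<^sub>m m m) $$ (a mod m, b mod m)"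
    by (subst blockA[OF on kl]) (use ia ib in auto)
  also have "\<dots> = Tmat m Gam Om k $$ (a, b)"
  proof -
    have om: "Om (b div m + 1) = OmT (b div m + 1)" by (rule Om_eq[OF on]) (use ib kl in auto)
    show ?thesis unfolding Tmat_def Let_def using a b om ia ib by simp
  qed
  finally show "((catm n m V k)\<^sup>T * A * catm n m V k) $$ (a, b) = Tmat m Gam Om k $$ (a, b)" .
qed (auto simp: Tmat_def)

lemma Tmat_carrier: "Tmat m Gam Om k \<in> carrier_mat (k * m) (k * m)" unfolding Tmat_def by simp

lemma VcTAV: assumes on: "ON (k + 1)" and kl: "k < l" and k1: "1 \<le> k"
  shows "(catm n m V k)\<^sup>T * (A * V (k + 1)) = Ecat m k k * (Gam k)\<^sup>T"
proof (rule eq_matI)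
  have Gk: "Gam k \<in> carrier_mat m m" using kl by (auto intro!: Gc)
  fix a c assume "a < dim_row (Ecat m k k * (Gam k)\<^sup>T)" "c < dim_col (Ecat m k k * (Gam k)\<^sup>T)"
  hence a: "a < k * m" and c: "c < m" using Gk by auto
  note ia = idx_bounds[OF a]
  have V1: "V (k + 1) \<in> carrier_mat n m" using kl by (auto intro!: Vc)
  have blk1: "(V b)\<^sup>T * (A * V (k + 1)) = (if b = k then (Gam k)\<^sup>T else 0\<^sub>m m m)" if b: "1 \<le> b" "b \<le> k" for b
  proof -
    have cb: "V b \<in> carrier_mat n m" using b kl by (auto intro!: Vc)
    have "(V b)\<^sup>T * (A * V (k + 1)) = ((V (k + 1))\<^sup>T * (A * V b))\<^sup>T"
      using cb V1 A Asym by (simp add: transpose_mult' massoc)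
    also have "(V (k + 1))\<^sup>T * (A * V b) = (if k + 1 = b then OmT b else if k + 1 = b + 1 then Gam b
     else if b = k + 1 + 1 then (Gam (k + 1))\<^sup>T else 0\<^sub>m m m)"
      by (rule blockA[OF on kl]) (use b in auto)
    finally show ?thesis using b by auto
  qed
  have "((catm n m V k)\<^sup>T * (A * V (k + 1))) $$ (a, c) =
    (\<lambda>b. if b = k then (Gam k)\<^sup>T else 0\<^sub>m m m) (a div m + 1) $$ (a mod m, c)"
    by (rule VcTX[OF _ _ blk1 a c]) (use kl A V1 in auto)
  also have "\<dots> = (Ecat m k k * (Gam k)\<^sup>T) $$ (a, c)"
  proof (cases "a div m + 1 = k")
    case True
    have "(Ecat m k k * (Gam k)\<^sup>T) $$ (a, c) = (\<Sum>t = 0..<m. (Gam k)\<^sup>T $$ (t, c) * (if t = a mod m then 1 else 0))"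
      using a c Gk True unfolding Ecat_def by (simp add: scalar_prod_def row_def col_def mult.commute eq_commute[of "a mod m"])
    also have "\<dots> = (Gam k)\<^sup>T $$ (a mod m, c)" by (rule sum_single[OF ia(2)])
    finally show ?thesis using True by simp
  next
    case False
    have "(Ecat m k k * (Gam k)\<^sup>T) $$ (a, c) = (\<Sum>t = 0..<m. 0)"
      using a c Gk False unfolding Ecat_def by (simp add: scalar_prod_def row_def col_def)
    thus ?thesis using False ia c by simp
  qed
  finally show "((catm n m V k)\<^sup>T * (A * V (k + 1))) $$ (a, c) = (Ecat m k k * (Gam k)\<^sup>T) $$ (a, c)" .
qed (use Gc[of k] Vc[of "k + 1"] kl A in auto)

lemma ProjZ: assumes on: "ON k" and kl: "k \<le> l" and j: "1 \<le> j" "j \<le> k"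
  shows "catm n m V k * ((catm n m V k)\<^sup>T * Z (j - 1)) = Z (j - 1)"
  using j
proof (induct j)
  case 0 thus ?case by simp
next
  case (Suc j)
  have VJ: "catm n m V k * ((catm n m V k)\<^sup>T * V (Suc j)) = V (Suc j)"
    unfolding VcTVj[OF on kl Suc(2,3)] by (rule catm_Ecat) (use kl Suc in \<open>auto intro!: Vc\<close>)
  show ?case
  proof (cases j)
    case 0 thus ?thesis using VJ by simp
  next
    case (Suc j')
    have j': "1 \<le> j" "j \<le> k" using Suc \<open>Suc j \<le> k\<close> by auto
    have IH: "catm n m V k * ((catm n m V k)\<^sup>T * Z (j - 1)) = Z (j - 1)" by (rule Suc.hyps[OF j'])
    have c: "Z (j - 1) \<in> carrier_mat n m" "V (Suc j) \<in> carrier_mat n m" "D j \<in> carrier_mat m m"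
      "Gam j \<in> carrier_mat m m" using j' kl \<open>Suc j \<le> k\<close> by (auto intro!: Vc Gc Dc Zc)
    have c2: "minv (D j) \<in> carrier_mat m m" by (rule minv_carrier[OF c(3)])
    have Zs: "Z (Suc j - 1) = V (Suc j) - Z (j - 1) * minv (D j) * (Gam j)\<^sup>T"
      using Suc by simp
    have "catm n m V k * ((catm n m V k)\<^sup>T * Z (Suc j - 1)) =
       catm n m V k * ((catm n m V k)\<^sup>T * V (Suc j)) - catm n m V k * ((catm n m V k)\<^sup>T * Z (j - 1)) * (minv (D j) * (Gam j)\<^sup>T)"
      unfolding Zs using c c2 by (simp add: mdist massoc)
    also have "\<dots> = Z (Suc j - 1)" unfolding VJ IH Zs using c c2 by (simp add: massoc)
    finally show ?thesis .
  qed
qed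

lemma blkE: assumes M: "M \<in> carrier_mat (k * m) (k * m)" and k1: "1 \<le> k"
  shows "blk m M k k = (Ecat m k k)\<^sup>T * M * Ecat m k k"
proof (rule eq_matI)
  fix a b assume "a < dim_row ((Ecat m k k)\<^sup>T * M * Ecat m k k)" "b < dim_col ((Ecat m k k)\<^sup>T * M * Ecat m k k)"
  hence a: "a < m" and b: "b < m" using M by auto
  define sa where "sa = (k - 1) * m + a"
  define sb where "sb = (k - 1) * m + b"
  have km: "k * m = (k - 1) * m + m" using k1 by (cases k) auto
  have sa: "sa < k * m" "sb < k * m" unfolding sa_def sb_def km using a b by auto
  have "((Ecat m k k)\<^sup>T * M * Ecat m k k) $$ (a, b) = ((Ecat m k k)\<^sup>T * (M * Ecat m k k)) $$ (a, b)"
    using M by (simp add: massoc)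
  also have "\<dots> = (\<Sum>s = 0..<k * m. (M * Ecat m k k) $$ (s, b) * (if s = sa then 1 else 0))"
    using a b M Ecat_eq[OF a] k1 unfolding sa_def
    by (simp add: scalar_prod_def row_def col_def mult.commute cong: if_cong)
  also have "\<dots> = (M * Ecat m k k) $$ (sa, b)" by (rule sum_single[OF sa(1)])
  also have "\<dots> = (\<Sum>t = 0..<k * m. M $$ (sa, t) * (if t = sb then 1 else 0))"
    using a b M sa Ecat_eq[OF b] k1 unfolding sb_def
    by (simp add: scalar_prod_def row_def col_def cong: if_cong)
  also have "\<dots> = M $$ (sa, sb)" by (rule sum_single[OF sa(2)])
  also have "\<dots> = blk m M k k $$ (a, b)" unfolding blk_def sa_def sb_def using a b by simp
  finally show "blk m M k k $$ (a, b) = ((Ecat m k k)\<^sup>T * M * Ecat m k k) $$ (a, b)" by simp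
qed (use M in \<open>auto simp: blk_def\<close>)

end

lemma minus_carrier'[simp]: "A \<in> carrier_mat a b \<Longrightarrow> B \<in> carrier_mat a b \<Longrightarrow> A - B \<in> carrier_mat a b"
  by (intro carrier_matI) auto
lemma add_carrier'[simp]: "A \<in> carrier_mat a b \<Longrightarrow> B \<in> carrier_mat a b \<Longrightarrow> A + B \<in> carrier_mat a b"
  by (intro carrier_matI) auto

lemma pdm_minv: assumes H: "pdm p H"
  shows "minv H \<in> carrier_mat p p" "(minv H)\<^sup>T = minv H" "H * minv H = 1\<^sub>m p" "minv H * H = 1\<^sub>m p"
  using minv_inv[OF pdm_carrier[OF H] pdm_det[OF H]] minv_sym[OF pdm_carrier[OF H] pdm_det[OF H] pdm_sym[OF H]]
  by auto

lemma pdm_qf_nonneg: "pdm p H \<Longrightarrow> X \<in> carrier_mat p 1 \<Longrightarrow> qf H X \<ge> 0"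
  using qf_zero[of H p] unfolding pdm_def by (cases "X = 0\<^sub>m p 1") (auto intro: less_imp_le)

lemma variational:
  assumes H: "pdm p H" and b: "b \<in> carrier_mat p 1" and c: "c \<in> carrier_mat p 1"
  shows "qf (minv H) b \<ge> 2 * (c\<^sup>T * b) $$ (0,0) - qf H c"
proof -
  note HI = pdm_minv[OF H]
  have Hc: "H \<in> carrier_mat p p" and Hs: "H\<^sup>T = H" using H unfolding pdm_def by auto
  define y where "y = minv H * b"
  have y: "y \<in> carrier_mat p 1" unfolding y_def using HI b by simp
  have Hy: "H * y = b" unfolding y_def using minv_cancel(1)[OF Hc pdm_det[OF H]] b by simp
  have "0 \<le> qf H (c - y)" by (rule pdm_qf_nonneg[OF H], intro carrier_matI) (use c y in auto)
  also have "\<dots> = qf H c - 2 * bil H c y + qf H y"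
  proof -
    have cy: "c - y \<in> carrier_mat p 1" using c y by (intro carrier_matI) auto
    show ?thesis unfolding qf_bil bil_lin(3)[OF c y cy Hc] bil_lin(4)[OF c y c Hc] bil_lin(4)[OF c y y Hc]
      using bil_sym[OF c y Hc Hs] by simp
  qed
  also have "bil H c y = (c\<^sup>T * b) $$ (0,0)" unfolding bil_def using Hy c y Hc by (simp add: massoc)
  also have "qf H y = qf (minv H) b"
  proof -
    have "qf H y = (y\<^sup>T * (H * y)) $$ (0,0)" unfolding qf_def using y Hc by (simp add: massoc)
    also have "\<dots> = (b\<^sup>T * (minv H * b)) $$ (0,0)" unfolding Hy unfolding y_def using HI b
      by (simp add: transpose_mult')
    finally show ?thesis unfolding qf_def using HI b by (simp add: massoc)
  qed
  finally show ?thesis by simp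
qed

lemma pdm_add: "pdm p X \<Longrightarrow> pdm p S \<Longrightarrow> pdm p (X + S)"
proof -
  assume X: "pdm p X" and S: "pdm p S"
  have c: "X \<in> carrier_mat p p" "S \<in> carrier_mat p p" using X S unfolding pdm_def by auto
  show "pdm p (X + S)" unfolding pdm_def
  proof (intro conjI ballI impI)
    show "X + S \<in> carrier_mat p p" using c by simp
    show "(X + S)\<^sup>T = X + S" using c pdm_sym[OF X] pdm_sym[OF S] by (simp add: transpose_add')
    fix Y :: "real mat" assume Y: "Y \<in> carrier_mat p 1" "Y \<noteq> 0\<^sub>m p 1"
    have "qf (X + S) Y = qf X Y + qf S Y" unfolding qf_bil using c Y by (simp add: bil_M_lin[of _ p])
    thus "qf (X + S) Y > 0" using X S Y unfolding pdm_def by (smt (verit))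
  qed
qed

lemma pdm_inv_diff: assumes X: "pdm p X" and S: "pdm p S"
  shows "pdm p (minv X - minv (X + S))"
proof -
  have Y: "pdm p (X + S)" by (rule pdm_add[OF X S])
  note XI = pdm_minv[OF X] and YI = pdm_minv[OF Y]
  have c: "X \<in> carrier_mat p p" "S \<in> carrier_mat p p" using X S unfolding pdm_def by auto
  show ?thesis unfolding pdm_def
  proof (intro conjI ballI impI)
    show "minv X - minv (X + S) \<in> carrier_mat p p" using XI YI by simp
    show "(minv X - minv (X + S))\<^sup>T = minv X - minv (X + S)" using XI YI by (simp add: transpose_minus')
    fix w :: "real mat" assume w: "w \<in> carrier_mat p 1" "w \<noteq> 0\<^sub>m p 1"
    define c where "c = minv (X + S) * w"
    have cc: "c \<in> carrier_mat p 1" unfolding c_def using YI w by simp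
    have XSc: "X + S \<in> carrier_mat p p" using c by simp
    have Yc: "(X + S) * c = w" unfolding c_def using minv_cancel(1)[OF XSc pdm_det[OF Y]] w by simp
    have cnz: "c \<noteq> 0\<^sub>m p 1"
    proof
      assume "c = 0\<^sub>m p 1"
      hence "(X + S) * c = 0\<^sub>m p 1" using c by simp
      thus False using Yc w by simp
    qed
    have qS: "qf S c > 0" using S cc cnz unfolding pdm_def by auto
    have v: "qf (minv X) w \<ge> 2 * (c\<^sup>T * w) $$ (0,0) - qf X c" by (rule variational[OF X w(1) cc])
    have cw: "(c\<^sup>T * w) $$ (0,0) = qf (minv (X + S)) w"
      unfolding qf_def c_def using YI w by (simp add: transpose_mult' massoc)
    have qY: "qf (X + S) c = (c\<^sup>T * w) $$ (0,0)" unfolding qf_def using Yc cc c by (simp add: massoc)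
    have qXS: "qf (X + S) c = qf X c + qf S c" unfolding qf_bil using c cc by (simp add: bil_M_lin[of _ p])
    have "qf (minv X - minv (X + S)) w = qf (minv X) w - qf (minv (X + S)) w"
      unfolding qf_bil using XI YI w by (simp add: bil_M_lin[of _ p])
    thus "qf (minv X - minv (X + S)) w > 0" using v cw qY qXS qS by linarith
  qed
qed

lemma pdm_congr: assumes M: "pdm p M" and P: "P \<in> carrier_mat p p" and d: "det P \<noteq> 0"
  shows "pdm p (P\<^sup>T * M * P)"
proof -
  have c: "M \<in> carrier_mat p p" and s: "M\<^sup>T = M" using M unfolding pdm_def by auto
  show ?thesis unfolding pdm_def
  proof (intro conjI ballI impI)
    show "P\<^sup>T * M * P \<in> carrier_mat p p" using c P by simp
    show "(P\<^sup>T * M * P)\<^sup>T = P\<^sup>T * M * P" using c P s by (simp add: transpose_mult' massoc)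
    fix X :: "real mat" assume X: "X \<in> carrier_mat p 1" "X \<noteq> 0\<^sub>m p 1"
    have PX: "P * X \<noteq> 0\<^sub>m p 1"
    proof
      assume h: "P * X = 0\<^sub>m p 1"
      have "X = minv P * (P * X)" using minv_cancel(2)[OF P d] X by simp
      thus False unfolding h using minv_inv[OF P d] X by simp
    qed
    have "qf (P\<^sup>T * M * P) X = qf M (P * X)" unfolding qf_bil using bil_mult[OF P X(1) X(1) c] by simp
    thus "qf (P\<^sup>T * M * P) X > 0" using M PX P X unfolding pdm_def by auto
  qed
qed

context LZB begin

lemma ONl: "ON l" using link[of "l - 1"] l1 by simp

lemma Gdet: "k < l \<Longrightarrow> det (Gam k) \<noteq> 0" using link[of k] by auto

lemma Om_OmT: "1 \<le> i \<Longrightarrow> i < l \<Longrightarrow> Om i = OmT i"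
  by (rule Om_eq[OF ONl]) auto

lemma Delta_cong: "1 \<le> j \<Longrightarrow> j < l \<Longrightarrow> Delta Gam Om j = D j"
proof (induct j)
  case 0 thus ?case by simp
next
  case (Suc j)
  show ?case
  proof (cases j)
    case 0 thus ?thesis unfolding D_def using Om_OmT[of 1] Suc by simp
  next
    case (Suc j')
    hence "Delta Gam Om j = D j" using Suc.hyps \<open>Suc j < l\<close> by simp
    thus ?thesis unfolding D_def using Om_OmT[of "Suc j"] \<open>Suc j < l\<close> Suc by simp
  qed
qed

lemma Phi_cong: "k < l \<Longrightarrow> Phi Gam Om k = Phi Gam OmT k"
proof (induct k)
  case 0 thus ?case by simp
next
  case (Suc k)
  have "Delta Gam Om (Suc k) = Delta Gam OmT (Suc k)" using Delta_cong[OF _ Suc(2)] unfolding D_def by simp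
  thus ?case using Suc by simp
qed

lemma Phi_carrier: "k < l \<Longrightarrow> Phi Gam OmT k \<in> carrier_mat m m"
proof (induct k)
  case 0 thus ?case using Gc[of 0] by simp
next
  case (Suc k)
  have c: "Gam (Suc k) \<in> carrier_mat m m" "Delta Gam OmT (Suc k) \<in> carrier_mat m m"
    using Suc Dc[of "Suc k"] unfolding D_def by (auto intro!: Gc)
  have "minv (Delta Gam OmT (Suc k)) \<in> carrier_mat m m" by (rule minv_carrier[OF c(2)])
  thus ?case using Suc c by simp
qed

lemma Psi_Phi: "k < l \<Longrightarrow> Psi k = (-1) ^ k \<cdot>\<^sub>m Phi Gam OmT k"
proof (induct k)
  case 0 thus ?case using Gc[of 0] l1 by (intro eq_matI) auto
next
  case (Suc k)
  have c: "Gam (Suc k) \<in> carrier_mat m m" "D (Suc k) \<in> carrier_mat m m" "Phi Gam OmT k \<in> carrier_mat m m"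
    using Suc Dc[of "Suc k"] Phi_carrier[of k] by (auto intro!: Gc)
  have c2: "minv (D (Suc k)) \<in> carrier_mat m m" by (rule minv_carrier[OF c(2)])
  have "Psi (Suc k) = (-1) \<cdot>\<^sub>m (Gam (Suc k) * minv (D (Suc k)) * ((-1) ^ k \<cdot>\<^sub>m Phi Gam OmT k))"
    using Suc by simp
  also have "\<dots> = (-1) ^ Suc k \<cdot>\<^sub>m (Gam (Suc k) * minv (D (Suc k)) * Phi Gam OmT k)"
    using c c2 by (intro eq_matI) (auto simp: mult_smult_r)
  also have "\<dots> = (-1) ^ Suc k \<cdot>\<^sub>m Phi Gam OmT (Suc k)" unfolding D_def by simp
  finally show ?case .
qed

lemma Ups_eq: assumes k: "k < l"
  shows "bcgUps A B X0 k = minv (Psi k) * (minv (D (k + 1)) * Psi k)"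
proof -
  from link[OF k] have on: "ON (k + 1)" and Rk: "bcgR A B X0 k = V (k + 1) * Psi k"
    and Pk: "bcgP A B X0 k = Z k * Psi k"
    and cPs: "Psi k \<in> carrier_mat m m" and dPs: "det (Psi k) \<noteq> 0" by auto
  from ZD[OF on k] have pd: "\<forall>j. 1 \<le> j \<longrightarrow> j \<le> k + 1 \<longrightarrow> pdm m (D j)"
    and az: "A * Z k = V (k + 1) * D (k + 1) + F (k + 1)" by auto
  have ZAZ: "(Z k)\<^sup>T * A * Z k = D (k + 1)" by (rule Dpd(1)[OF on k az])
  have pdD: "pdm m (D (k + 1))" using pd by auto
  have dD: "det (D (k + 1)) \<noteq> 0" using pdD pdm_det by auto
  define Dk where "Dk = D (k + 1)"
  define Mi where "Mi = minv Dk"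
  define Ps where "Ps = Psi k"
  define Pi where "Pi = minv Ps"
  have c: "Z k \<in> carrier_mat n m" "V (k + 1) \<in> carrier_mat n m"
    "Dk \<in> carrier_mat m m" "Ps \<in> carrier_mat m m"
    using k cPs unfolding Dk_def Ps_def by (auto intro!: Vc Dc Zc)
  note MI = minv_inv[OF c(3) dD[folded Dk_def], folded Mi_def]
  note PI = minv_inv[OF c(4) dPs[folded Ps_def], folded Pi_def]
  have cMi: "Mi \<in> carrier_mat m m" using MI by simp
  have cPi: "Pi \<in> carrier_mat m m" using PI by simp
  have PiT: "minv (Ps\<^sup>T) = Pi\<^sup>T" unfolding Pi_def by (rule minv_transpose[OF c(4) dPs[folded Ps_def]])
  have dPsT: "det (Ps\<^sup>T) \<noteq> 0" using det_transpose[OF c(4)] dPs unfolding Ps_def by simp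
  have dDPs: "det (Dk * Ps) \<noteq> 0" using det_mult_nz[OF c(3) c(4)] dD dPs unfolding Dk_def Ps_def by simp
  have cancelPs2: "Pi\<^sup>T * (Ps\<^sup>T * X) = X" if "dim_row X = m" for X
  proof -
    have "Ps\<^sup>T * Pi\<^sup>T = 1\<^sub>m m" using transpose_mult'[of Pi Ps] PI c(4) cPi by simp
    hence "Pi\<^sup>T * Ps\<^sup>T = 1\<^sub>m m" using mat_mult_left_right_inverse[of "Ps\<^sup>T" m "Pi\<^sup>T"] c(4) cPi by simp
    thus "Pi\<^sup>T * (Ps\<^sup>T * X) = X" using that c(4) cPi by (intro cancel_r[of _ _ m]) auto
  qed
  have RtR: "(bcgR A B X0 k)\<^sup>T * bcgR A B X0 k = Ps\<^sup>T * Ps"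
    unfolding Rk Ps_def[symmetric] using massoc_subst[OF _ _ VTV[of "k + 1"]] c k
    by (simp add: transpose_mult' massoc one_mult')
  have PAP: "(bcgP A B X0 k)\<^sup>T * A * bcgP A B X0 k = Ps\<^sup>T * (Dk * Ps)"
  proof -
    have "(Z k)\<^sup>T * (A * (Z k * Ps)) = ((Z k)\<^sup>T * A * Z k) * Ps" using c A by (simp add: massoc)
    thus ?thesis unfolding Pk Ps_def[symmetric] ZAZ Dk_def[symmetric] using c A
      by (simp add: transpose_mult' massoc)
  qed
  have minvPAP: "minv ((bcgP A B X0 k)\<^sup>T * A * bcgP A B X0 k) = Pi * (Mi * Pi\<^sup>T)"
    unfolding PAP using minv_mult[of "Ps\<^sup>T" m "Dk * Ps"] minv_mult[OF c(3) c(4) dD[folded Dk_def] dPs[folded Ps_def]]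
      dPsT dDPs c PiT cPi cMi unfolding Mi_def[symmetric] Pi_def[symmetric] by (simp add: massoc)
  show ?thesis
    unfolding bcgUps_def minvPAP RtR using cancelPs2[of Ps] c cPi cMi
    unfolding Pi_def Ps_def Mi_def Dk_def by (simp add: massoc)
qed

end

lemma qf_mult: "U \<in> carrier_mat p q \<Longrightarrow> Y \<in> carrier_mat q 1 \<Longrightarrow> M \<in> carrier_mat p p \<Longrightarrow>
  qf M (U * Y) = qf (U\<^sup>T * M * U) Y"
  unfolding qf_bil by (rule bil_mult)

lemma nrm_mult: "U \<in> carrier_mat p q \<Longrightarrow> Y \<in> carrier_mat q 1 \<Longrightarrow> U\<^sup>T * U = 1\<^sub>m q \<Longrightarrow>
  nrm (U * Y) = nrm Y"
  unfolding nrm_def using massoc_subst[of "U\<^sup>T" U Y "1\<^sub>m q"] by (simp add: transpose_mult' massoc one_mult')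

lemma qf_smult_one: "Y \<in> carrier_mat p 1 \<Longrightarrow> qf (c \<cdot>\<^sub>m 1\<^sub>m p) Y = c * nrm Y"
  unfolding qf_bil nrm_bil by (simp add: bil_M_lin(3)[of Y p Y "1\<^sub>m p" "1\<^sub>m p"])

lemma left_inv_nz: fixes U Y W :: "real mat" assumes U: "U \<in> carrier_mat p q" and Y: "Y \<in> carrier_mat q 1" and W: "W \<in> carrier_mat q p"
  and WU: "W * U = 1\<^sub>m q" and nz: "Y \<noteq> 0\<^sub>m q 1" shows "U * Y \<noteq> 0\<^sub>m p 1"
proof
  assume "U * Y = 0\<^sub>m p 1"
  hence "W * (U * Y) = 0\<^sub>m q 1" using W by simp
  moreover have "W * (U * Y) = Y" using massoc_subst[OF _ _ WU, of Y] U W Y left_mult_one_mat[OF Y] by simp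
  ultimately show False using nz by simp
qed

locale LZM = LZB n m l A B X0 V Gam Om for n m l and A B X0 :: "real mat" and V Gam Om +
  fixes \<mu> :: real
  assumes mu_pos: "0 < \<mu>" and mu_lt: "\<mu> < lambda_min A"
begin

lemma specA: "X \<in> carrier_mat n 1 \<Longrightarrow> X \<noteq> 0\<^sub>m n 1 \<Longrightarrow> qf A X > \<mu> * nrm X"
  by (rule spectral_pd[OF A Asym mu_lt])

lemma mu0: "pdm m (Delta_mu m Gam Om \<mu> 0)" "pdm m (D 1 - Delta_mu m Gam Om \<mu> 0)"
proof -
  have DM: "Delta_mu m Gam Om \<mu> 0 = \<mu> \<cdot>\<^sub>m 1\<^sub>m m" unfolding Delta_mu_def by simp
  show "pdm m (Delta_mu m Gam Om \<mu> 0)" unfolding DM pdm_def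
  proof (intro conjI ballI impI)
    fix Y :: "real mat" assume Y: "Y \<in> carrier_mat m 1" "Y \<noteq> 0\<^sub>m m 1"
    show "qf (\<mu> \<cdot>\<^sub>m 1\<^sub>m m) Y > 0" unfolding qf_smult_one[OF Y(1)] using mu_pos nrm_pos[OF Y] by simp
  qed (auto simp: transpose_smult')
  have V1: "V 1 \<in> carrier_mat n m" using l1 by (auto intro!: Vc)
  have O1: "OmT 1 \<in> carrier_mat m m" using l1 by (auto intro!: OmTc)
  have D1: "D 1 = OmT 1" by (simp add: D_Suc[of 0, simplified])
  show "pdm m (D 1 - Delta_mu m Gam Om \<mu> 0)" unfolding DM D1 pdm_def
  proof (intro conjI ballI impI)
    show "OmT 1 - \<mu> \<cdot>\<^sub>m 1\<^sub>m m \<in> carrier_mat m m" using O1 by simp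
    show "(OmT 1 - \<mu> \<cdot>\<^sub>m 1\<^sub>m m)\<^sup>T = OmT 1 - \<mu> \<cdot>\<^sub>m 1\<^sub>m m"
      using O1 OmT_sym[of 1] l1 by (simp add: transpose_minus' transpose_smult')
    fix Y :: "real mat" assume Y: "Y \<in> carrier_mat m 1" "Y \<noteq> 0\<^sub>m m 1"
    have VY: "V 1 * Y \<in> carrier_mat n 1" "V 1 * Y \<noteq> 0\<^sub>m n 1"
      using V1 Y left_inv_nz[OF V1 Y(1) _ VTV[of 1] Y(2)] l1 by auto
    have "qf (OmT 1 - \<mu> \<cdot>\<^sub>m 1\<^sub>m m) Y = qf (OmT 1) Y - \<mu> * nrm Y"
      unfolding qf_bil nrm_bil[OF Y(1)] using O1 Y by (simp add: bil_M_lin[of _ m])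
    also have "qf (OmT 1) Y = qf A (V 1 * Y)" unfolding OmT_def using qf_mult[OF V1 Y(1) A] by simp
    also have "nrm Y = nrm (V 1 * Y)" using nrm_mult[OF V1 Y(1) VTV[of 1]] l1 by simp
    finally show "qf (OmT 1 - \<mu> \<cdot>\<^sub>m 1\<^sub>m m) Y > 0" using specA[OF VY] by simp
  qed
qed

end

lemma qf_diff: "M \<in> carrier_mat p p \<Longrightarrow> N \<in> carrier_mat p p \<Longrightarrow> Y \<in> carrier_mat p 1 \<Longrightarrow>
  qf (M - N) Y = qf M Y - qf N Y"
  unfolding qf_bil by (simp add: bil_M_lin(2)[of Y p Y M N])

lemma qf_add: "M \<in> carrier_mat p p \<Longrightarrow> N \<in> carrier_mat p p \<Longrightarrow> Y \<in> carrier_mat p 1 \<Longrightarrow>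
  qf (M + N) Y = qf M Y + qf N Y"
  unfolding qf_bil by (simp add: bil_M_lin(1)[of Y p Y M N])

lemma qf_expand: assumes M: "M \<in> carrier_mat p p" and s: "M\<^sup>T = M"
  and X: "X \<in> carrier_mat p 1" and Y: "Y \<in> carrier_mat p 1"
  shows "qf M (X - Y) = qf M X - 2 * bil M X Y + qf M Y"
proof -
  have XY: "X - Y \<in> carrier_mat p 1" using X Y by simp
  show ?thesis unfolding qf_bil bil_lin(3)[OF X Y XY M] bil_lin(4)[OF X Y X M] bil_lin(4)[OF X Y Y M]
    using bil_sym[OF X Y M s] by simp
qed

context LZM begin

lemma muk: assumes k1: "1 \<le> k" and kl: "k < l"
  shows "pdm m (Delta_mu m Gam Om \<mu> k)" "pdm m (D (k + 1) - Delta_mu m Gam Om \<mu> k)"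
proof -
  define N where "N = k * m"
  define Vk where "Vk = catm n m V k"
  define E where "E = Ecat m k k"
  define T where "T = Tmat m Gam Om k"
  define AM where "AM = A - \<mu> \<cdot>\<^sub>m 1\<^sub>m n"
  define H where "H = T - \<mu> \<cdot>\<^sub>m 1\<^sub>m N"
  define G where "G = Gam k"
  define Dk where "Dk = D k"
  define Mk where "Mk = minv Dk"
  have on: "ON (k + 1)" using ON_mono[OF ONl] kl by simp
  have onk: "ON k" using ON_mono[OF ONl] kl by simp
  have cVk: "Vk \<in> carrier_mat n N" unfolding Vk_def N_def by simp
  have cE: "E \<in> carrier_mat N m" unfolding E_def N_def by simp
  have cT: "T \<in> carrier_mat N N" unfolding T_def N_def by (rule Tmat_carrier)
  have cAM: "AM \<in> carrier_mat n n" unfolding AM_def using A by simp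
  have cH: "H \<in> carrier_mat N N" unfolding H_def using cT by simp
  have cG: "G \<in> carrier_mat m m" unfolding G_def using kl by (auto intro!: Gc)
  have cV1: "V (k + 1) \<in> carrier_mat n m" using kl by (auto intro!: Vc)
  have cVk': "V k \<in> carrier_mat n m" using kl by (auto intro!: Vc)
  have cOm1: "OmT (k + 1) \<in> carrier_mat m m" using kl by (auto intro!: OmTc)
  have pdDk: "pdm m Dk" unfolding Dk_def using ZD[of "k - 1"] onk kl k1 by auto
  note DI = pdm_minv[OF pdDk, folded Mk_def]
  have cDk: "Dk \<in> carrier_mat m m" using pdDk pdm_carrier by auto
  have cMk: "Mk \<in> carrier_mat m m" using DI by simp
  have MkS: "Mk\<^sup>T = Mk" using DI by simp
  have VtV: "Vk\<^sup>T * Vk = 1\<^sub>m N" unfolding Vk_def N_def by (rule VcTVc[OF onk]) (use kl in simp)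
  have TT: "Vk\<^sup>T * A * Vk = T" unfolding Vk_def T_def by (rule VcTAVc[OF on kl])
  have Tsym: "T\<^sup>T = T" unfolding TT[symmetric] using cVk A Asym by (simp add: transpose_mult' massoc)
  have H_eq: "H = Vk\<^sup>T * AM * Vk"
  proof -
    have "Vk\<^sup>T * AM * Vk = Vk\<^sup>T * A * Vk - \<mu> \<cdot>\<^sub>m (Vk\<^sup>T * Vk)"
      unfolding AM_def using cVk A by (simp add: mdist massoc)
    thus ?thesis unfolding TT VtV H_def by simp
  qed
  have qAM: "qf AM X = qf A X - \<mu> * nrm X" if "X \<in> carrier_mat n 1" for X
    unfolding AM_def using qf_diff[OF A _ that, of "\<mu> \<cdot>\<^sub>m 1\<^sub>m n"] qf_smult_one[OF that] by simp
  have Hsym: "H\<^sup>T = H" unfolding H_def using cT Tsym by (simp add: transpose_minus' transpose_smult')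
  have Hpd: "pdm N H" unfolding pdm_def
  proof (intro conjI ballI impI)
    fix X :: "real mat" assume X: "X \<in> carrier_mat N 1" "X \<noteq> 0\<^sub>m N 1"
    have VX: "Vk * X \<in> carrier_mat n 1" "Vk * X \<noteq> 0\<^sub>m n 1"
      using cVk X left_inv_nz[OF cVk X(1) _ VtV X(2)] by auto
    have "qf H X = qf AM (Vk * X)" unfolding H_eq using qf_mult[OF cVk X(1) cAM] by simp
    also have "\<dots> = qf A (Vk * X) - \<mu> * nrm (Vk * X)" by (rule qAM[OF VX(1)])
    finally show "qf H X > 0" using specA[OF VX] by simp
  qed (use cH Hsym in auto)
  note HI = pdm_minv[OF Hpd]
  define Hi where "Hi = minv H"
  have cHi: "Hi \<in> carrier_mat N N" "Hi\<^sup>T = Hi" "H * Hi = 1\<^sub>m N" using HI unfolding Hi_def by auto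
  define Gb where "Gb = E\<^sup>T * Hi * E"
  have cGb: "Gb \<in> carrier_mat m m" unfolding Gb_def using cE cHi by simp
  have GbS: "Gb\<^sup>T = Gb" unfolding Gb_def using cE cHi by (simp add: transpose_mult' massoc)
  have blkHi: "blk m (minv (Tmat m Gam Om k - \<mu> \<cdot>\<^sub>m 1\<^sub>m (k * m))) k k = Gb"
    unfolding Gb_def Hi_def H_def T_def N_def E_def by (rule blkE[OF _ k1]) (use cHi in \<open>simp add: Hi_def H_def T_def N_def\<close>)
  have OmMu: "Om_mu m Gam Om \<mu> k = \<mu> \<cdot>\<^sub>m 1\<^sub>m m + G * Gb * G\<^sup>T"
    unfolding Om_mu_def blkHi G_def ..
  have DMu: "Delta_mu m Gam Om \<mu> k = \<mu> \<cdot>\<^sub>m 1\<^sub>m m + G * Gb * G\<^sup>T - G * Mk * G\<^sup>T"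
    unfolding Delta_mu_def OmMu using k1 Delta_cong[OF k1 kl] unfolding Mk_def Dk_def G_def by simp
  have Dk1: "D (k + 1) = OmT (k + 1) - G * Mk * G\<^sup>T"
    unfolding G_def Mk_def Dk_def using D_Suc[of k] k1 by simp
  have cGGb: "G * Gb * G\<^sup>T \<in> carrier_mat m m" "G * Mk * G\<^sup>T \<in> carrier_mat m m" using cG cGb cMk by auto
  have cDM: "Delta_mu m Gam Om \<mu> k \<in> carrier_mat m m" unfolding DMu using cGGb by simp
  have DMsym: "(Delta_mu m Gam Om \<mu> k)\<^sup>T = Delta_mu m Gam Om \<mu> k"
    unfolding DMu using cG cGb cMk GbS MkS by (simp add: transpose_minus' transpose_add' transpose_smult' transpose_mult' massoc)
  have cD1: "D (k + 1) \<in> carrier_mat m m" unfolding Dk1 using cOm1 cGGb by simp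
  have D1sym: "(D (k + 1))\<^sup>T = D (k + 1)"
    unfolding Dk1 using cG cMk MkS cOm1 OmT_sym[of "k + 1"] kl
    by (simp add: transpose_minus' transpose_mult' massoc)
  have qGMG: "qf (G * M * G\<^sup>T) Y = qf M (G\<^sup>T * Y)" if "M \<in> carrier_mat m m" "Y \<in> carrier_mat m 1" for M Y
    using qf_mult[of "G\<^sup>T" m m Y M] that cG by (simp add: massoc)
  have qGb: "qf Gb z = qf Hi (E * z)" if "z \<in> carrier_mat m 1" for z
    unfolding Gb_def using qf_mult[OF cE that cHi(1)] by simp
  have qDM: "qf (Delta_mu m Gam Om \<mu> k) Y = \<mu> * nrm Y + qf Hi (E * (G\<^sup>T * Y)) - qf Mk (G\<^sup>T * Y)"
    if Y: "Y \<in> carrier_mat m 1" for Y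
  proof -
    have z: "G\<^sup>T * Y \<in> carrier_mat m 1" using cG Y by simp
    have c0: "\<mu> \<cdot>\<^sub>m 1\<^sub>m m \<in> carrier_mat m m" by simp
    have c1: "\<mu> \<cdot>\<^sub>m 1\<^sub>m m + G * Gb * G\<^sup>T \<in> carrier_mat m m" using cGGb by simp
    show ?thesis unfolding DMu
      using qf_diff[OF c1 cGGb(2) Y] qf_add[OF c0 cGGb(1) Y] qf_smult_one[OF Y] qGMG[OF cGb Y] qGMG[OF cMk Y] qGb[OF z]
      by simp
  qed
  show "pdm m (Delta_mu m Gam Om \<mu> k)" unfolding pdm_def
  proof (intro conjI ballI impI)
    fix Y :: "real mat" assume Y: "Y \<in> carrier_mat m 1" "Y \<noteq> 0\<^sub>m m 1"
    define z where "z = G\<^sup>T * Y"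
    define b where "b = E * z"
    define u where "u = Z (k - 1) * (Mk * z)"
    define c where "c = Vk\<^sup>T * u"
    have cz: "z \<in> carrier_mat m 1" unfolding z_def using cG Y by simp
    have cb: "b \<in> carrier_mat N 1" unfolding b_def using cE cz by simp
    have cZ: "Z (k - 1) \<in> carrier_mat n m" using kl by (auto intro!: Zc)
    have cu: "u \<in> carrier_mat n 1" unfolding u_def using cZ cMk cz by simp
    have cc: "c \<in> carrier_mat N 1" unfolding c_def using cVk cu by simp
    have var: "qf Hi b \<ge> 2 * (c\<^sup>T * b) $$ (0,0) - qf H c" unfolding Hi_def by (rule variational[OF Hpd cb cc])
    have ZTVk: "(Z (k - 1))\<^sup>T * V k = 1\<^sub>m m" using ZTV[of "k - 1"] onk kl k1 by simp
    have VkE: "Vk * E = V k" unfolding Vk_def E_def by (rule catm_Ecat) (use kl k1 in \<open>auto intro!: Vc\<close>)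
    have cb1: "(c\<^sup>T * b) $$ (0,0) = qf Mk z"
    proof -
      have "c\<^sup>T * b = u\<^sup>T * ((Vk * E) * z)" unfolding c_def b_def using cVk cu cE cz
        by (simp add: transpose_mult' massoc)
      also have "\<dots> = (Mk * z)\<^sup>T * (((Z (k - 1))\<^sup>T * V k) * z)" unfolding VkE u_def using cZ cMk cz cVk'
        by (simp add: transpose_mult' massoc)
      also have "\<dots> = z\<^sup>T * Mk * z" unfolding ZTVk using cMk cz MkS by (simp add: transpose_mult' massoc one_mult')
      finally show ?thesis unfolding qf_def by simp
    qed
    have Pz: "Vk * (Vk\<^sup>T * Z (k - 1)) = Z (k - 1)" unfolding Vk_def using ProjZ[OF onk _ k1 order.refl] kl by simp
    have Vc_u: "Vk * c = u" unfolding c_def u_def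
      using massoc_subst[OF _ _ Pz, of "Mk * z"] cVk cZ cMk cz by (simp add: massoc)
    have qHc: "qf H c = qf AM u" unfolding H_eq using qf_mult[OF cVk cc cAM] Vc_u by simp
    have az: "A * Z (k - 1) = V (k - 1 + 1) * D (k - 1 + 1) + F (k - 1 + 1)"
      using ZD[of "k - 1"] onk kl k1 by simp
    have ZAZ: "(Z (k - 1))\<^sup>T * A * Z (k - 1) = Dk" unfolding Dk_def using Dpd(1)[of "k - 1"] onk kl k1 az by simp
    have qAu: "qf A u = qf Mk z"
    proof -
      have "qf A u = qf Dk (Mk * z)" unfolding u_def using qf_mult[OF cZ _ A, of "Mk * z"] ZAZ cMk cz by simp
      also have "\<dots> = (z\<^sup>T * (Mk * (Dk * (Mk * z)))) $$ (0,0)" unfolding qf_def using cMk cz cDk MkS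
        by (simp add: transpose_mult' massoc)
      also have "Dk * (Mk * z) = z" unfolding Mk_def using minv_cancel(1)[OF cDk pdm_det[OF pdDk]] cz by simp
      finally show ?thesis unfolding qf_def using cMk cz by (simp add: massoc)
    qed
    have nu: "nrm u \<ge> 0" by (rule nrm_ge0[OF cu])
    have "qf Hi b \<ge> qf Mk z" using var cb1 qHc qAM[OF cu] qAu nu mu_pos
      by (smt (verit) mult_nonneg_nonneg)
    hence "qf (Delta_mu m Gam Om \<mu> k) Y \<ge> \<mu> * nrm Y" using qDM[OF Y(1)] unfolding b_def z_def by simp
    moreover have "\<mu> * nrm Y > 0" using mu_pos nrm_pos[OF Y] by simp
    ultimately show "qf (Delta_mu m Gam Om \<mu> k) Y > 0" by simp
  qed (use cDM DMsym in auto)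
  show "pdm m (D (k + 1) - Delta_mu m Gam Om \<mu> k)" unfolding pdm_def
  proof (intro conjI ballI impI)
    show "D (k + 1) - Delta_mu m Gam Om \<mu> k \<in> carrier_mat m m" using cD1 cDM by simp
    show "(D (k + 1) - Delta_mu m Gam Om \<mu> k)\<^sup>T = D (k + 1) - Delta_mu m Gam Om \<mu> k"
      using cD1 cDM D1sym DMsym by (simp add: transpose_minus')
    fix Y :: "real mat" assume Y: "Y \<in> carrier_mat m 1" "Y \<noteq> 0\<^sub>m m 1"
    define z where "z = G\<^sup>T * Y"
    define b where "b = E * z"
    define c where "c = Hi * b"
    define W1 where "W1 = V (k + 1) * Y"
    define W2 where "W2 = Vk * c"
    have cz: "z \<in> carrier_mat m 1" unfolding z_def using cG Y by simp
    have cb: "b \<in> carrier_mat N 1" unfolding b_def using cE cz by simp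
    have cc: "c \<in> carrier_mat N 1" unfolding c_def using cHi cb by simp
    have cW1: "W1 \<in> carrier_mat n 1" unfolding W1_def using cV1 Y by simp
    have cW2: "W2 \<in> carrier_mat n 1" unfolding W2_def using cVk cc by simp
    have V1V1: "(V (k + 1))\<^sup>T * V (k + 1) = 1\<^sub>m m" using VTV[of "k + 1"] kl by simp
    have VkV1: "Vk\<^sup>T * V (k + 1) = 0\<^sub>m N m" unfolding Vk_def N_def by (rule VcTVk1[OF on kl])
    have VkAV1: "Vk\<^sup>T * (A * V (k + 1)) = E * G\<^sup>T" unfolding Vk_def E_def G_def by (rule VcTAV[OF on kl k1])
    have qHib: "qf Hi b = (b\<^sup>T * c) $$ (0,0)" unfolding qf_def c_def using cHi cb by (simp add: massoc)
    have f1: "qf (G * Gb * G\<^sup>T) Y = qf Hi b" unfolding b_def z_def using qGMG[OF cGb Y(1)] qGb[OF cz] z_def by simp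
    have f2: "qf A W1 = qf (OmT (k + 1)) Y" unfolding W1_def OmT_def using qf_mult[OF cV1 Y(1) A] by simp
    have f3: "nrm W1 = nrm Y" unfolding W1_def by (rule nrm_mult[OF cV1 Y(1) V1V1])
    have f4: "qf A W2 = qf T c" unfolding W2_def TT[symmetric] by (rule qf_mult[OF cVk cc A])
    have f4': "nrm W2 = nrm c" unfolding W2_def by (rule nrm_mult[OF cVk cc VtV])
    have f5: "bil A W1 W2 = qf Hi b"
    proof -
      have "(V (k + 1))\<^sup>T * (A * Vk) = (Vk\<^sup>T * (A * V (k + 1)))\<^sup>T"
        using cV1 cVk A Asym by (simp add: transpose_mult' massoc)
      hence e: "(V (k + 1))\<^sup>T * (A * Vk) = G * E\<^sup>T" unfolding VkAV1 using cE cG by (simp add: transpose_mult')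
      have "bil A W1 W2 = (Y\<^sup>T * (((V (k + 1))\<^sup>T * (A * Vk)) * c)) $$ (0,0)"
        unfolding bil_def W1_def W2_def using cV1 Y cVk cc A by (simp add: transpose_mult' massoc)
      also have "\<dots> = (b\<^sup>T * c) $$ (0,0)" unfolding e b_def z_def using Y cG cE cc
        by (simp add: transpose_mult' massoc)
      finally show ?thesis using qHib by simp
    qed
    have f6: "bil (1\<^sub>m n) W1 W2 = 0"
    proof -
      have "bil (1\<^sub>m n) W1 W2 = (Y\<^sup>T * (((Vk\<^sup>T * V (k + 1))\<^sup>T) * c)) $$ (0,0)"
        unfolding bil_def W1_def W2_def using cV1 Y cVk cc by (simp add: transpose_mult' massoc)
      thus ?thesis unfolding VkV1 using Y cc by simp
    qed
    have f8: "qf T c - \<mu> * nrm c = qf H c" unfolding H_def using qf_diff[OF cT _ cc, of "\<mu> \<cdot>\<^sub>m 1\<^sub>m N"] qf_smult_one[OF cc] by simp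
    have f9: "qf H c = qf Hi b"
    proof -
      have Hc: "H * c = b" unfolding c_def Hi_def using minv_cancel(1)[OF cH pdm_det[OF Hpd]] cb by simp
      have "qf H c = (c\<^sup>T * b) $$ (0,0)" unfolding qf_def using Hc cH cc by (simp add: massoc)
      also have "\<dots> = (b\<^sup>T * (Hi * b)) $$ (0,0)" unfolding c_def using cHi cb by (simp add: transpose_mult')
      finally show ?thesis unfolding qf_def using cHi cb by (simp add: massoc)
    qed
    define U where "U = W1 - W2"
    have cU: "U \<in> carrier_mat n 1" unfolding U_def using cW1 cW2 by simp
    have qU: "qf A U = qf A W1 - 2 * bil A W1 W2 + qf A W2" unfolding U_def by (rule qf_expand[OF A Asym cW1 cW2])
    have nU: "nrm U = nrm W1 - 2 * bil (1\<^sub>m n) W1 W2 + nrm W2"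
      unfolding U_def nrm_bil[OF cU[unfolded U_def]] nrm_bil[OF cW1] nrm_bil[OF cW2]
      by (rule qf_expand[OF one_carrier_mat _ cW1 cW2, unfolded qf_bil]) simp
    have Unz: "U \<noteq> 0\<^sub>m n 1"
    proof
      assume h: "U = 0\<^sub>m n 1"
      have "(V (k + 1))\<^sup>T * U = Y"
      proof -
        have "(V (k + 1))\<^sup>T * U = ((V (k + 1))\<^sup>T * V (k + 1)) * Y - (Vk\<^sup>T * V (k + 1))\<^sup>T * c"
          unfolding U_def W1_def W2_def using cV1 Y cVk cc by (simp add: mdist massoc)
        also have "\<dots> = Y" unfolding V1V1 VkV1 using Y cc by (simp add: minus_zero_mat')
        finally show ?thesis .
      qed
      thus False using h Y cV1 by simp
    qed
    have pos: "qf A U > \<mu> * nrm U" by (rule specA[OF cU Unz])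
    have qS: "qf (D (k + 1) - Delta_mu m Gam Om \<mu> k) Y = qf (OmT (k + 1)) Y - \<mu> * nrm Y - qf (G * Gb * G\<^sup>T) Y"
      using qf_diff[OF cD1 cDM Y(1)] qDM[OF Y(1)] qf_diff[OF cOm1 cGGb(2) Y(1)] qGMG[OF cMk Y(1)] qGMG[OF cGb Y(1)]
        qGb[of "G\<^sup>T * Y"] cG Y unfolding Dk1 by simp
    show "qf (D (k + 1) - Delta_mu m Gam Om \<mu> k) Y > 0"
      using pos qU nU f1 f2 f3 f4 f4' f5 f6 f8 f9 qS by (simp add: algebra_simps)
  qed
qed

end

context LZM begin

lemma main_k: assumes kl: "k < l"
  shows "pdm m (Delta_mu m Gam Om \<mu> k)" "pdm m (Theta_mu A B X0 m Gam Om \<mu> k - bcgTheta A B X0 k)"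
proof -
  define X where "X = Delta_mu m Gam Om \<mu> k"
  define S where "S = D (k + 1) - X"
  have pX: "pdm m X" and pS: "pdm m S" unfolding X_def S_def using mu0 muk[OF _ kl] by (cases k; auto)+
  thus "pdm m (Delta_mu m Gam Om \<mu> k)" unfolding X_def by simp
  have cX: "X \<in> carrier_mat m m" and cS: "S \<in> carrier_mat m m" using pX pS pdm_carrier by auto
  have cD: "D (k + 1) \<in> carrier_mat m m" using kl by (auto intro!: Dc)
  have DXS: "D (k + 1) = X + S" unfolding S_def using cX cD by (intro eq_matI) auto
  from link[OF kl] have Rk: "bcgR A B X0 k = V (k + 1) * Psi k"
    and cPs: "Psi k \<in> carrier_mat m m" and dPs: "det (Psi k) \<noteq> 0" by auto
  define Ps where "Ps = Psi k"
  define Ph where "Ph = Phi Gam Om k"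
  define s :: real where "s = (-1) ^ k"
  have s0: "s \<noteq> 0" unfolding s_def by simp
  have cPh: "Ph \<in> carrier_mat m m" unfolding Ph_def using Phi_cong[OF kl] Phi_carrier[OF kl] by simp
  have PsPh: "Ps = s \<cdot>\<^sub>m Ph" unfolding Ps_def Ph_def s_def using Psi_Phi[OF kl] Phi_cong[OF kl] by simp
  have dPh: "det Ph \<noteq> 0" using dPs unfolding Ps_def[symmetric] PsPh using cPh by simp
  have cV: "V (k + 1) \<in> carrier_mat n m" using kl by (auto intro!: Vc)
  have RtR: "(bcgR A B X0 k)\<^sup>T * bcgR A B X0 k = Ps\<^sup>T * Ps"
    unfolding Rk Ps_def[symmetric] using massoc_subst[OF _ _ VTV[of "k + 1"]] cV cPs kl
    unfolding Ps_def by (simp add: transpose_mult' massoc one_mult')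
  note XI = pdm_minv[OF pX]
  have cXi: "minv X \<in> carrier_mat m m" using XI by simp
  have cDi: "minv (D (k + 1)) \<in> carrier_mat m m" using minv_carrier[OF cD] .
  have cPs': "Ps \<in> carrier_mat m m" using cPs unfolding Ps_def .
  have cPsi: "minv Ps \<in> carrier_mat m m" using minv_carrier[OF cPs'] .
  have canc: "Ps * (minv Ps * Y) = Y" if "dim_row Y = m" for Y
    using minv_cancel(1)[OF cPs' dPs[folded Ps_def]] that by simp
  have Ups_mu_eq: "Ups_mu m Gam Om \<mu> k = minv Ps * (minv X * Ps)"
  proof -
    have mPs: "minv (s \<cdot>\<^sub>m Ph) = (1 / s) \<cdot>\<^sub>m minv Ph" by (rule minv_smult[OF cPh dPh s0])
    have cPhi: "minv Ph \<in> carrier_mat m m" using minv_carrier[OF cPh] .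
    have "minv Ps * (minv X * Ps) = ((1 / s) * s) \<cdot>\<^sub>m (minv Ph * (minv X * Ph))"
      unfolding PsPh mPs using cPhi cXi cPh by (intro eq_matI) (auto simp: mult_smult_r smult_mult_l)
    also have "\<dots> = minv Ph * (minv X * Ph)" using s0 by (intro eq_matI) auto
    finally show ?thesis unfolding Ups_mu_def X_def Ph_def using cPhi cXi cPh
      unfolding X_def[symmetric] Ph_def[symmetric] by (simp add: massoc)
  qed
  have Th_mu: "Theta_mu A B X0 m Gam Om \<mu> k = Ps\<^sup>T * (minv X * Ps)"
    unfolding Theta_mu_def RtR Ups_mu_eq using canc[of "minv X * Ps"] cPs' cXi cPsi
    by (simp add: massoc)
  have Th: "bcgTheta A B X0 k = Ps\<^sup>T * (minv (D (k + 1)) * Ps)"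
    unfolding bcgTheta_def RtR Ups_eq[OF kl] Ps_def[symmetric] using canc[of "minv (D (k + 1)) * Ps"] cPs' cDi cPsi
    by (simp add: massoc)
  have diff: "Theta_mu A B X0 m Gam Om \<mu> k - bcgTheta A B X0 k = Ps\<^sup>T * (minv X - minv (X + S)) * Ps"
    unfolding Th_mu Th DXS[symmetric] using cPs' cXi cDi by (simp add: mdist massoc)
  show "pdm m (Theta_mu A B X0 m Gam Om \<mu> k - bcgTheta A B X0 k)"
    unfolding diff by (rule pdm_congr[OF pdm_inv_diff[OF pX pS] cPs' dPs[folded Ps_def]])
qed

end

theorem lemma6:
  fixes n m l :: nat and A B X0 :: "real mat" and \<mu> :: real
    and V Gam Om :: "nat \<Rightarrow> real mat"
  assumes A_spd: "spd n A"
    and B_dim: "B \<in> carrier_mat n m" and X0_dim: "X0 \<in> carrier_mat n m"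
    and krylov: "\<forall>j. 1 \<le> j \<and> j \<le> l \<longrightarrow> full_col_rank (krylov_mat n m A (B - A * X0) j)"
    and lanczos: "lanczos n m A (B - A * X0) l V Gam Om"
    and mu_pos: "0 < \<mu>" and mu_lt: "\<mu> < lambda_min A"
    and l_ge: "1 \<le> l"
    and R_rank: "\<forall>k < l. full_col_rank (bcgR A B X0 k)"
  shows "\<forall>k < l. spd m (Delta_mu m Gam Om \<mu> k) \<and>
                 spd m (Theta_mu A B X0 m Gam Om \<mu> k - bcgTheta A B X0 k)"
proof -
  have Ac: "A \<in> carrier_mat n n" and As: "A\<^sup>T = A" using A_spd unfolding spd_def by auto
  have Apd: "pdm n A" using A_spd spd_pdm by auto
  have R0c: "B - A * X0 \<in> carrier_mat n m" using Ac B_dim X0_dim by simp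
  interpret LZM n m l A B X0 V Gam Om \<mu>
  proof (unfold_locales)
    show "A \<in> carrier_mat n n" "A\<^sup>T = A" "pdm n A" "B - A * X0 \<in> carrier_mat n m"
      "lanczos n m A (B - A * X0) l V Gam Om" "1 \<le> l" "B \<in> carrier_mat n m" "X0 \<in> carrier_mat n m"
      "\<forall>k<l. full_col_rank (bcgR A B X0 k)" "0 < \<mu>" "\<mu> < lambda_min A"
      using Ac As Apd R0c lanczos l_ge B_dim X0_dim R_rank mu_pos mu_lt by auto
  qed
  show ?thesis using main_k spd_pdm by auto
qed

end
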